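(* For $\theta>0$ and an integer $n\ge1$, let $X_{1,n}$ be a random variable on $\{1,\dots,n\}$ with $$P\{X_{1,n}=k\}=\frac\theta n\,\frac{n!}{(n-k)!}\,\frac{\Gamma(\theta+n-k)}{\Gamma(\theta+n)},\quad k=1,\dots,n.$$ Let $n=n(\theta)\to\infty$ as $\theta\to\infty$ in one of the regimes: Case B: $\theta/n\to\infty$; Case C: $\theta/n\to c\in(0,\infty)$; Case D: $\theta/n\to0$. Then, as $\theta\to\infty$, the family of laws of $X_{1,n}/n$ satisfies an LDP on $[0,1]$ with speed $\gamma(\theta)$ and rate function $I$, where $\gamma(\theta)=n\log\frac\theta n$ and $I(x)=x$ in Case B; $\gamma(\theta)=\theta$ and $$I(x)=I_c(x)=\frac1c\big[(c+1)\log(c+1)+(1-x)\log(1-x)-(c+1-x)\log(c+1-x)\big]$$ in Case C; and $\gamma(\theta)=\theta$ and $I(x)=\log\frac1{1-x}$ (with value $+\infty$ at $x=1$) in Case D.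
   Context: $X_{1,n}$ is the size of the first (oldest) age class in a random sample of size $n$ from a $PD(\theta)$ population. Convention $0\log0=0$. An LDP with speed $\gamma(\theta)$ uses normalization $\gamma(\theta)^{-1}\log$ as $\theta\to\infty$. *)

theory Defs
  imports "HOL-Analysis.Analysis" "HOL-Library.Liminf_Limsup"
begin

text \<open>Law of the size X_{1,n} of the oldest age class in a sample of size n from PD(theta):
  P{X_{1,n} = k} for k = 1..n (and 0 otherwise).\<close>
definition X1_pmf :: "real \<Rightarrow> nat \<Rightarrow> nat \<Rightarrow> real" where
  "X1_pmf \<theta> n k =
     (if 1 \<le> k \<and> k \<le> n
      then \<theta> / real n * (fact n / fact (n - k)) * (Gamma (\<theta> + real n - real k) / Gamma (\<theta> + real n))
      else 0)"

definition scaled_law :: "real \<Rightarrow> nat \<Rightarrow> real set \<Rightarrow> real" where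
  "scaled_law \<theta> n A = (\<Sum>k\<in>{1..n}. if real k / real n \<in> A then X1_pmf \<theta> n k else 0)"

definition log_scaled :: "real \<Rightarrow> real \<Rightarrow> ereal" where
  "log_scaled g p = (if p \<le> 0 then -\<infinity> else ereal (ln p / g))"

text \<open>Closed/open subsets of [0,1] are exactly the traces F \<inter> [0,1] of closed/open sets of reals.\<close>
definition LDP01 :: "(real \<Rightarrow> real set \<Rightarrow> real) \<Rightarrow> (real \<Rightarrow> real) \<Rightarrow> (real \<Rightarrow> ereal) \<Rightarrow> bool" where
  "LDP01 P \<gamma> I \<longleftrightarrow>
     (\<forall>x\<in>{0..1}. 0 \<le> I x) \<and>
     (\<forall>a::ereal. closed {x\<in>{0..1}. I x \<le> a}) \<and>
     (\<forall>F. closed F \<longrightarrow>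
        Limsup at_top (\<lambda>\<theta>. log_scaled (\<gamma> \<theta>) (P \<theta> (F \<inter> {0..1}))) \<le> - (INF x\<in>F \<inter> {0..1}. I x)) \<and>
     (\<forall>G. open G \<longrightarrow>
        - (INF x\<in>G \<inter> {0..1}. I x) \<le> Liminf at_top (\<lambda>\<theta>. log_scaled (\<gamma> \<theta>) (P \<theta> (G \<inter> {0..1}))))"

definition xlogx :: "real \<Rightarrow> real" where
  "xlogx t = (if t = 0 then 0 else t * ln t)"

definition rate_C :: "real \<Rightarrow> real \<Rightarrow> ereal" where
  "rate_C c x = ereal ((1 / c) * (xlogx (c + 1) + xlogx (1 - x) - xlogx (c + 1 - x)))"

definition rate_D :: "real \<Rightarrow> ereal" where
  "rate_D x = (if x \<ge> 1 then \<infinity> else ereal (ln (1 / (1 - x))))"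

end

theory Submission
  imports Defs "HOL-Real_Asymp.Real_Asymp"
begin


definition Tt :: "real \<Rightarrow> nat \<Rightarrow> nat \<Rightarrow> real" where
  "Tt \<theta> n k = (\<Prod>j\<in>{1..<k}. (real n - real j) / (\<theta> + real n - real j))"

lemma Tt_1[simp]: "Tt \<theta> n (Suc 0) = 1" by (simp add: Tt_def)

lemma Tt_Suc: "1 \<le> k \<Longrightarrow> Tt \<theta> n (Suc k) = Tt \<theta> n k * ((real n - real k) / (\<theta> + real n - real k))"
  unfolding Tt_def by simp

lemma Tt_split: "1 \<le> k1 \<Longrightarrow> k1 \<le> k2 \<Longrightarrow>
  Tt \<theta> n k2 = Tt \<theta> n k1 * (\<Prod>j\<in>{k1..<k2}. (real n - real j) / (\<theta> + real n - real j))"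
  unfolding Tt_def by (simp add: prod.atLeastLessThan_concat)

lemma Gamma_step: "x > 0 \<Longrightarrow> Gamma (x + 1) = x * Gamma (x::real)"
proof -
  assume "x > 0"
  hence "x \<notin> \<int>\<^sub>\<le>\<^sub>0" using nonpos_Ints_nonpos by force
  thus ?thesis by (rule Gamma_plus1)
qed

lemma pmf_T: assumes "\<theta> > 0" "1 \<le> k" "k \<le> n"
  shows "X1_pmf \<theta> n k = Tt \<theta> n k * (\<theta> / (\<theta> + real n - real k))"
  using assms(2,3)
proof (induction k rule: dec_induct)
  case base
  have n1: "n \<ge> 1" using base by simp
  have g: "Gamma (\<theta> + real n) = (\<theta> + real n - 1) * Gamma (\<theta> + real n - 1)"
    using Gamma_step[of "\<theta> + real n - 1"] assms(1) n1 by simp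
  have gp: "Gamma (\<theta> + real n - 1) > 0" using assms(1) n1 by (intro Gamma_real_pos) simp
  have f: "fact n / fact (n - 1) = (real n :: real)"
  proof -
    have "(fact n :: real) = real n * fact (n - 1)" using n1 by (simp add: fact_reduce)
    thus ?thesis by simp
  qed
  have "X1_pmf \<theta> n 1 = \<theta> / real n * real n * (Gamma (\<theta> + real n - 1) / Gamma (\<theta> + real n))"
    using n1 f by (simp add: X1_pmf_def)
  also have "\<dots> = \<theta> / (\<theta> + real n - 1)" using g gp n1 by simp
  finally show ?case by simp
next
  case (step k)
  have k1: "Suc k \<le> n" "1 \<le> k" using step by auto
  define G where "G = Gamma (\<theta> + real n - real k - 1)"
  have gp: "G > 0" unfolding G_def using assms(1) k1 by (intro Gamma_real_pos) simp
  have g: "Gamma (\<theta> + real n - real k) = (\<theta> + real n - real k - 1) * G"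
    unfolding G_def using Gamma_step[of "\<theta> + real n - real k - 1"] assms(1) k1 by simp
  have fk: "fact (n - k) = real (n - k) * (fact (n - Suc k) :: real)"
  proof -
    have "n - k = Suc (n - Suc k)" using k1 by simp
    thus ?thesis by (simp only: fact_Suc of_nat_mult of_nat_fact)
  qed
  have nk: "real (n - k) = real n - real k" using k1 by simp
  have pk: "X1_pmf \<theta> n k = \<theta> / real n * (fact n / fact (n - k)) * (Gamma (\<theta> + real n - real k) / Gamma (\<theta> + real n))"
    using k1 by (simp add: X1_pmf_def)
  have pk1: "X1_pmf \<theta> n (Suc k) = \<theta> / real n * (fact n / fact (n - Suc k)) * (G / Gamma (\<theta> + real n))"
    using k1 by (simp add: X1_pmf_def G_def algebra_simps)
  have r: "X1_pmf \<theta> n (Suc k) = X1_pmf \<theta> n k * ((real n - real k) / (\<theta> + real n - real k - 1))"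
  proof -
    have pos1: "\<theta> + real n - real k - 1 \<noteq> 0" using assms(1) k1 by simp
    have pos2: "real n - real k \<noteq> 0" using k1 by simp
    have fp: "(fact (n - Suc k) :: real) \<noteq> 0" by simp
    have e: "\<And>a b p q c d e::real. p \<noteq> 0 \<Longrightarrow> q \<noteq> 0 \<Longrightarrow> c \<noteq> 0 \<Longrightarrow>
       a * (b / (p * c)) * ((q * d) / e) * (p / q) = a * (b / c) * (d / e)"
      by (simp add: field_simps)
    show ?thesis unfolding pk pk1 g fk nk by (rule e[OF pos2 pos1 fp, symmetric])
  qed
  have e2: "\<And>T a b p q::real. q \<noteq> 0 \<Longrightarrow> p \<noteq> 0 \<Longrightarrow>
       T * (a / p) * (b / q) = T * (b / p) * (a / q)" by (simp add: field_simps)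
  have pos3: "\<theta> + real n - real k \<noteq> 0" using assms(1) k1 by simp
  have pos4: "\<theta> + real n - real k - 1 \<noteq> 0" using assms(1) k1 by simp
  have "X1_pmf \<theta> n (Suc k) = Tt \<theta> n k * (\<theta> / (\<theta> + real n - real k)) * ((real n - real k) / (\<theta> + real n - real k - 1))"
    using r step.IH k1 by simp
  also have "\<dots> = Tt \<theta> n k * ((real n - real k) / (\<theta> + real n - real k)) * (\<theta> / (\<theta> + real n - real k - 1))"
    by (rule e2[OF pos4 pos3])
  also have "\<dots> = Tt \<theta> n (Suc k) * (\<theta> / (\<theta> + real n - real (Suc k)))"
    using Tt_Suc[OF k1(2)] by (simp add: diff_add_eq_diff_diff_swap)
  finally show ?case .
qed

lemma Tt_factor_pos: "\<theta> > 0 \<Longrightarrow> j < n \<Longrightarrow> (real n - real j) / (\<theta> + real n - real j) > 0"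
  by (simp add: of_nat_less_iff)

lemma Tt_factor_le1: "\<theta> > 0 \<Longrightarrow> j \<le> n \<Longrightarrow> (real n - real j) / (\<theta> + real n - real j) \<le> 1"
  by (simp add: divide_le_eq_1)

lemma Tt_factor_nonneg: "\<theta> > 0 \<Longrightarrow> j \<le> n \<Longrightarrow> (real n - real j) / (\<theta> + real n - real j) \<ge> 0"
  by simp

lemma Tt_pos: "\<theta> > 0 \<Longrightarrow> k \<le> n \<Longrightarrow> Tt \<theta> n k > 0"
  unfolding Tt_def by (intro prod_pos Tt_factor_pos) auto

lemma Tt_nonneg: "\<theta> > 0 \<Longrightarrow> k \<le> Suc n \<Longrightarrow> Tt \<theta> n k \<ge> 0"
  unfolding Tt_def by (intro prod_nonneg Tt_factor_nonneg) auto

lemma Tt_le1: "\<theta> > 0 \<Longrightarrow> k \<le> Suc n \<Longrightarrow> Tt \<theta> n k \<le> 1"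
  unfolding Tt_def by (intro prod_le_1) (auto intro: Tt_factor_nonneg Tt_factor_le1)

lemma Tt_end: "1 \<le> n \<Longrightarrow> Tt \<theta> n (Suc n) = 0"
  unfolding Tt_def by (rule prod_zero) auto

lemma pmf_diff: assumes "\<theta> > 0" "1 \<le> k" "k \<le> n"
  shows "X1_pmf \<theta> n k = Tt \<theta> n k - Tt \<theta> n (Suc k)"
proof -
  have d: "\<theta> + real n - real k \<noteq> 0" using assms by simp
  have "Tt \<theta> n k - Tt \<theta> n (Suc k) = Tt \<theta> n k * (1 - (real n - real k) / (\<theta> + real n - real k))"
    using Tt_Suc[OF assms(2)] by (simp add: algebra_simps)
  also have "1 - (real n - real k) / (\<theta> + real n - real k) = \<theta> / (\<theta> + real n - real k)"
    using d by (simp add: field_simps)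
  finally show ?thesis using pmf_T[OF assms] by simp
qed

lemma pmf_nonneg: assumes t: "\<theta> > 0" shows "X1_pmf \<theta> n k \<ge> 0"
proof (cases "1 \<le> k \<and> k \<le> n")
  case True
  hence p: "\<theta> + real n - real k > 0" using t by simp
  have "Tt \<theta> n k * (\<theta> / (\<theta> + real n - real k)) \<ge> 0"
    using Tt_nonneg[OF t, of k n] True t p by (intro mult_nonneg_nonneg divide_nonneg_pos) simp_all
  thus ?thesis by (simp only: pmf_T[OF t conjunct1[OF True] conjunct2[OF True]])
next
  case False
  hence "X1_pmf \<theta> n k = 0" unfolding X1_pmf_def by (rule if_not_P)
  thus ?thesis by simp
qed

lemma tail_sum: assumes "\<theta> > 0" "1 \<le> k1" "k1 \<le> k2" "k2 \<le> Suc n"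
  shows "(\<Sum>k\<in>{k1..<k2}. X1_pmf \<theta> n k) = Tt \<theta> n k1 - Tt \<theta> n k2"
  using assms(3,4)
proof (induction k2 rule: dec_induct)
  case base
  then show ?case by simp
next
  case (step m)
  have "(\<Sum>k\<in>{k1..<Suc m}. X1_pmf \<theta> n k) = (\<Sum>k\<in>{k1..<m}. X1_pmf \<theta> n k) + X1_pmf \<theta> n m"
    using step by simp
  also have "\<dots> = Tt \<theta> n k1 - Tt \<theta> n m + (Tt \<theta> n m - Tt \<theta> n (Suc m))"
    using step assms pmf_diff[OF assms(1), of m n] by simp
  finally show ?case by simp
qed

lemma Tt_antimono: assumes "\<theta> > 0" "1 \<le> k1" "k1 \<le> k2" "k2 \<le> Suc n"
  shows "Tt \<theta> n k2 \<le> Tt \<theta> n k1"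
proof -
  have "0 \<le> (\<Sum>k\<in>{k1..<k2}. X1_pmf \<theta> n k)" by (intro sum_nonneg pmf_nonneg assms(1))
  thus ?thesis using tail_sum[OF assms] by simp
qed

lemma Tt_ratio: assumes "\<theta> > 0" "1 \<le> k1" "k1 \<le> k2" "k2 \<le> n"
  shows "Tt \<theta> n k2 \<le> Tt \<theta> n k1 * exp (- real (k2 - k1) * \<theta> / (\<theta> + real n))"
proof -
  let ?f = "\<lambda>j. (real n - real j) / (\<theta> + real n - real j)"
  have b: "?f j \<le> exp (- \<theta> / (\<theta> + real n))" if "j \<le> n" for j
  proof -
    have "?f j \<le> real n / (\<theta> + real n)" using assms(1) that
      by (simp add: divide_simps) (simp add: algebra_simps)
    also have "\<dots> = 1 + (- \<theta> / (\<theta> + real n))" using assms(1) by (simp add: field_simps)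
    also have "\<dots> \<le> exp (- \<theta> / (\<theta> + real n))" by (rule exp_ge_add_one_self)
    finally show ?thesis .
  qed
  have "(\<Prod>j\<in>{k1..<k2}. ?f j) \<le> (\<Prod>j\<in>{k1..<k2}. exp (- \<theta> / (\<theta> + real n)))"
    by (intro prod_mono) (use assms b Tt_factor_nonneg in auto)
  also have "\<dots> = exp (- \<theta> / (\<theta> + real n)) ^ (k2 - k1)" by simp
  also have "\<dots> = exp (real (k2 - k1) * (- \<theta> / (\<theta> + real n)))" by (rule exp_of_nat_mult[symmetric])
  finally have p: "(\<Prod>j\<in>{k1..<k2}. ?f j) \<le> exp (- real (k2 - k1) * \<theta> / (\<theta> + real n))" by simp
  show ?thesis unfolding Tt_split[OF assms(2,3), of \<theta> n]
    by (rule mult_left_mono[OF p]) (use Tt_nonneg[OF assms(1), of k1 n] assms in simp)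
qed

lemma ln_Tt: assumes "\<theta> > 0" "k \<le> n"
  shows "ln (Tt \<theta> n k) = (\<Sum>j\<in>{1..<k}. ln (real n - real j) - ln (\<theta> + real n - real j))"
proof -
  have "ln (Tt \<theta> n k) = (\<Sum>j\<in>{1..<k}. ln ((real n - real j) / (\<theta> + real n - real j)))"
    unfolding Tt_def by (rule ln_prod) (use assms Tt_factor_pos[OF assms(1)] in force)+
  also have "\<dots> = (\<Sum>j\<in>{1..<k}. ln (real n - real j) - ln (\<theta> + real n - real j))"
  proof (rule sum.cong[OF refl])
    fix j assume j: "j \<in> {1..<k}"
    hence "real j < real n" using assms by simp
    thus "ln ((real n - real j) / (\<theta> + real n - real j)) = ln (real n - real j) - ln (\<theta> + real n - real j)"
    proof -
      have "real n - real j > 0" "\<theta> + real n - real j > 0" using \<open>real j < real n\<close> assms by auto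
      thus ?thesis by (simp add: ln_div)
    qed
  qed
  finally show ?thesis .
qed

definition Kf :: "real \<Rightarrow> nat \<Rightarrow> nat" where "Kf a n = max 1 (nat \<lceil>a * real n\<rceil>)"

lemma Kf_bounds: assumes "0 \<le> a" "a \<le> 1" "1 \<le> n"
  shows "1 \<le> Kf a n" "Kf a n \<le> n" "a * real n \<le> real (Kf a n)" "real (Kf a n) \<le> a * real n + 1"
proof -
  have c0: "a * real n \<le> real n" using assms by (simp add: mult_left_le_one_le)
  have c1: "\<lceil>a * real n\<rceil> \<le> int n" using c0 by (simp add: ceiling_le_iff)
  have c2: "nat \<lceil>a * real n\<rceil> \<le> n" using c1 by (simp only: nat_le_iff)
  show "1 \<le> Kf a n" by (simp add: Kf_def)
  show "Kf a n \<le> n" unfolding Kf_def by (rule max.boundedI[OF _ c2]) (use assms(3) in simp)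
  have "a * real n \<le> real (nat \<lceil>a * real n\<rceil>)" by (rule real_nat_ceiling_ge)
  also have "\<dots> \<le> real (Kf a n)" unfolding Kf_def by (rule of_nat_mono) (rule max.cobounded2)
  finally show "a * real n \<le> real (Kf a n)" .
  show "real (Kf a n) \<le> a * real n + 1"
  proof (cases "a * real n \<le> 0")
    case True
    hence "nat \<lceil>a * real n\<rceil> = 0" by simp
    hence "Kf a n = 1" by (simp add: Kf_def)
    thus ?thesis using True assms by simp
  next
    case False
    have e: "real (nat \<lceil>a * real n\<rceil>) = of_int \<lceil>a * real n\<rceil>" using False by simp
    have l: "of_int \<lceil>a * real n\<rceil> < a * real n + 1" by linarith
    have "nat \<lceil>a * real n\<rceil> \<ge> 1" using False by linarith
    hence "Kf a n = nat \<lceil>a * real n\<rceil>" by (simp add: Kf_def max_def)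
    thus ?thesis using e l by simp
  qed
qed

lemma Kf_one: "1 \<le> n \<Longrightarrow> Kf 1 n = n" by (simp add: Kf_def)



lemma scaled_upper: assumes t: "\<theta> > 0" and n: "1 \<le> n" and a: "0 \<le> a" "a \<le> 1"
  and S: "\<forall>x\<in>S. a \<le> x"
  shows "scaled_law \<theta> n S \<le> Tt \<theta> n (Kf a n)"
proof -
  let ?K = "Kf a n"
  have K: "1 \<le> ?K" "?K \<le> n" "a * real n \<le> real ?K" using Kf_bounds[OF a n] by auto
  have "scaled_law \<theta> n S \<le> (\<Sum>k\<in>{1..n}. if ?K \<le> k then X1_pmf \<theta> n k else 0)"
    unfolding scaled_law_def
  proof (rule sum_mono)
    fix k assume k: "k \<in> {1..n}"
    show "(if real k / real n \<in> S then X1_pmf \<theta> n k else 0) \<le> (if ?K \<le> k then X1_pmf \<theta> n k else 0)"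
    proof (cases "real k / real n \<in> S")
      case True
      hence "a \<le> real k / real n" using S by auto
      hence "a * real n \<le> real k" using n by (simp add: divide_simps)
      hence "\<lceil>a * real n\<rceil> \<le> int k" by (simp add: ceiling_le_iff)
      hence "nat \<lceil>a * real n\<rceil> \<le> k" by (simp only: nat_le_iff)
      hence "?K \<le> k" using k unfolding Kf_def by simp
      thus ?thesis using True by simp
    next
      case False
      thus ?thesis using pmf_nonneg[OF t] by simp
    qed
  qed
  also have "\<dots> = (\<Sum>k\<in>{k\<in>{1..n}. ?K \<le> k}. X1_pmf \<theta> n k)"
    by (rule sum.inter_filter[symmetric]) simp
  also have "{k\<in>{1..n}. ?K \<le> k} = {?K..<Suc n}" using K by auto
  also have "(\<Sum>k\<in>{?K..<Suc n}. X1_pmf \<theta> n k) = Tt \<theta> n ?K - Tt \<theta> n (Suc n)"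
    by (rule tail_sum) (use t K in auto)
  finally show ?thesis using Tt_end[OF n] by simp
qed

lemma scaled_lower: assumes t: "\<theta> > 0" and k: "1 \<le> k1" "k1 \<le> k2" "k2 \<le> Suc n"
  and S: "\<And>k. k1 \<le> k \<Longrightarrow> k < k2 \<Longrightarrow> real k / real n \<in> S"
  shows "Tt \<theta> n k1 - Tt \<theta> n k2 \<le> scaled_law \<theta> n S"
proof -
  have "Tt \<theta> n k1 - Tt \<theta> n k2 = (\<Sum>k\<in>{k1..<k2}. X1_pmf \<theta> n k)" by (rule tail_sum[symmetric]) (use t k in auto)
  also have "\<dots> = (\<Sum>k\<in>{k1..<k2}. if real k / real n \<in> S then X1_pmf \<theta> n k else 0)"
    by (rule sum.cong) (use S in auto)
  also have "\<dots> \<le> scaled_law \<theta> n S" unfolding scaled_law_def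
    by (rule sum_mono2) (use k pmf_nonneg[OF t] in auto)
  finally show ?thesis .
qed

lemma ev_nat_ge: "filterlim (n :: real \<Rightarrow> nat) at_top at_top \<Longrightarrow> eventually (\<lambda>\<theta>. M \<le> real (n \<theta>)) at_top"
proof -
  assume "filterlim n at_top at_top"
  hence "eventually (\<lambda>\<theta>. nat \<lceil>M\<rceil> \<le> n \<theta>) at_top" unfolding filterlim_at_top by blast
  thus ?thesis
  proof (rule eventually_mono)
    fix \<theta> assume "nat \<lceil>M\<rceil> \<le> n \<theta>"
    hence "real (nat \<lceil>M\<rceil>) \<le> real (n \<theta>)" by (rule of_nat_mono)
    thus "M \<le> real (n \<theta>)" using real_nat_ceiling_ge[of M] by linarith
  qed
qed

lemma ev_real_gt: "filterlim (g :: real \<Rightarrow> real) at_top at_top \<Longrightarrow> eventually (\<lambda>\<theta>. M < g \<theta>) at_top"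
  by (simp add: filterlim_at_top_dense)

lemma Kf_mono: "a \<le> b \<Longrightarrow> Kf a n \<le> Kf b n"
proof -
  assume "a \<le> b"
  hence "a * real n \<le> b * real n" by (simp add: mult_right_mono)
  hence "nat \<lceil>a * real n\<rceil> \<le> nat \<lceil>b * real n\<rceil>" by (intro nat_mono ceiling_mono)
  thus ?thesis unfolding Kf_def by simp
qed

locale ldp_setup =
  fixes n :: "real \<Rightarrow> nat" and \<gamma> :: "real \<Rightarrow> real" and J :: "real \<Rightarrow> ereal"
  assumes n: "filterlim n at_top at_top"
  and g: "filterlim \<gamma> at_top at_top"
  and lim: "\<And>a. a \<in> {0..1} \<Longrightarrow> ((\<lambda>\<theta>. ereal (ln (Tt \<theta> (n \<theta>) (Kf a (n \<theta>))) / \<gamma> \<theta>)) \<longlongrightarrow> - J a) at_top"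
begin

abbreviation Lf where "Lf a \<theta> \<equiv> ereal (ln (Tt \<theta> (n \<theta>) (Kf a (n \<theta>))) / \<gamma> \<theta>)"

lemma ev_basic: "eventually (\<lambda>\<theta>. \<theta> > 0 \<and> 1 \<le> n \<theta> \<and> \<gamma> \<theta> > 0) at_top"
proof -
  have "eventually (\<lambda>\<theta>::real. \<theta> > 0) at_top" using eventually_gt_at_top[of "0::real"] by simp
  moreover have "eventually (\<lambda>\<theta>. 1 \<le> real (n \<theta>)) at_top" by (rule ev_nat_ge[OF n])
  moreover have "eventually (\<lambda>\<theta>. 0 < \<gamma> \<theta>) at_top" by (rule ev_real_gt[OF g])
  ultimately show ?thesis by eventually_elim simp
qed

lemma J_nonneg: assumes a: "a \<in> {0..1}" shows "0 \<le> J a"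
proof -
  have "eventually (\<lambda>\<theta>. Lf a \<theta> \<le> 0) at_top"
    using ev_basic
  proof eventually_elim
    case (elim \<theta>)
    hence t: "\<theta> > 0" "1 \<le> n \<theta>" "\<gamma> \<theta> > 0" by auto
    have K: "Kf a (n \<theta>) \<le> n \<theta>" using Kf_bounds(2)[of a "n \<theta>"] a t by auto
    have "0 < Tt \<theta> (n \<theta>) (Kf a (n \<theta>))" by (rule Tt_pos[OF t(1) K])
    moreover have "Tt \<theta> (n \<theta>) (Kf a (n \<theta>)) \<le> 1" by (rule Tt_le1[OF t(1)]) (use K in simp)
    ultimately have "ln (Tt \<theta> (n \<theta>) (Kf a (n \<theta>))) \<le> 0" by simp
    hence "ln (Tt \<theta> (n \<theta>) (Kf a (n \<theta>))) / \<gamma> \<theta> \<le> 0" using t(3) by (simp add: divide_nonpos_pos)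
    thus ?case by simp
  qed
  hence "- J a \<le> 0" by (intro tendsto_upperbound[OF lim[OF a]]) simp_all
  thus ?thesis by simp
qed

lemma J_mono: assumes a: "a \<in> {0..1}" and b: "b \<in> {0..1}" and ab: "a \<le> b" shows "J a \<le> J b"
proof -
  have "eventually (\<lambda>\<theta>. Lf b \<theta> \<le> Lf a \<theta>) at_top"
    using ev_basic
  proof eventually_elim
    case (elim \<theta>)
    hence t: "\<theta> > 0" "1 \<le> n \<theta>" "\<gamma> \<theta> > 0" by auto
    have Kb: "Kf b (n \<theta>) \<le> n \<theta>" using Kf_bounds(2)[of b "n \<theta>"] b t by auto
    have Ka: "1 \<le> Kf a (n \<theta>)" using Kf_bounds(1)[of a "n \<theta>"] a t by auto
    have Kab: "Kf a (n \<theta>) \<le> Kf b (n \<theta>)" by (rule Kf_mono[OF ab])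
    have p: "0 < Tt \<theta> (n \<theta>) (Kf b (n \<theta>))" by (rule Tt_pos[OF t(1) Kb])
    have "Tt \<theta> (n \<theta>) (Kf b (n \<theta>)) \<le> Tt \<theta> (n \<theta>) (Kf a (n \<theta>))"
      by (rule Tt_antimono[OF t(1) Ka Kab]) (use Kb in simp)
    hence "ln (Tt \<theta> (n \<theta>) (Kf b (n \<theta>))) \<le> ln (Tt \<theta> (n \<theta>) (Kf a (n \<theta>)))" using p by simp
    hence "ln (Tt \<theta> (n \<theta>) (Kf b (n \<theta>))) / \<gamma> \<theta> \<le> ln (Tt \<theta> (n \<theta>) (Kf a (n \<theta>))) / \<gamma> \<theta>"
      using t(3) by (simp add: divide_right_mono)
    thus ?case by simp
  qed
  hence "- J b \<le> - J a" by (intro tendsto_le[OF _ lim[OF a] lim[OF b]]) simp_all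
  thus ?thesis by simp
qed

end


lemma log_scaled_le: assumes "g > 0" "p \<le> q" "q > 0"
  shows "log_scaled g p \<le> ereal (ln q / g)"
proof (cases "p \<le> 0")
  case True thus ?thesis by (simp add: log_scaled_def)
next
  case False
  hence "ln p \<le> ln q" using assms by simp
  hence "ln p / g \<le> ln q / g" using assms(1) by (simp add: divide_right_mono)
  thus ?thesis using False by (simp add: log_scaled_def)
qed

lemma log_scaled_ge: assumes "g > 0" "q \<le> p" "q > 0"
  shows "ereal (ln q / g) \<le> log_scaled g p"
proof -
  have p: "p > 0" using assms by simp
  have "ln q \<le> ln p" using assms by simp
  hence "ln q / g \<le> ln p / g" using assms(1) by (simp add: divide_right_mono)
  thus ?thesis using p by (simp add: log_scaled_def)
qed

context ldp_setup begin

lemma closed_part: assumes F: "closed F"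
  shows "Limsup at_top (\<lambda>\<theta>. log_scaled (\<gamma> \<theta>) (scaled_law \<theta> (n \<theta>) (F \<inter> {0..1}))) \<le> - (INF x\<in>F \<inter> {0..1}. J x)"
proof (cases "F \<inter> {0..1} = {}")
  case True
  have "\<And>\<theta>. scaled_law \<theta> (n \<theta>) (F \<inter> {0..1}) = 0" unfolding True scaled_law_def by simp
  hence "(\<lambda>\<theta>. log_scaled (\<gamma> \<theta>) (scaled_law \<theta> (n \<theta>) (F \<inter> {0..1}))) = (\<lambda>_. -\<infinity>)"
    by (simp add: log_scaled_def)
  thus ?thesis by (simp add: Limsup_const)
next
  case False
  define S where "S = F \<inter> {0..1}"
  have Sne: "S \<noteq> {}" using False S_def by simp
  have Sb: "bdd_below S" unfolding S_def by (rule bdd_belowI[of _ 0]) auto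
  have Sc: "closed S" unfolding S_def using F by (intro closed_Int) auto
  define a where "a = Inf S"
  have aS: "a \<in> S" unfolding a_def by (rule closed_contains_Inf[OF Sne Sb Sc])
  have a01: "a \<in> {0..1}" using aS S_def by simp
  have low: "\<forall>x\<in>S. a \<le> x" unfolding a_def using Sb by (auto intro: cInf_lower)
  have inf: "(INF x\<in>S. J x) = J a"
  proof (rule antisym)
    show "(INF x\<in>S. J x) \<le> J a" using aS by (rule INF_lower)
    show "J a \<le> (INF x\<in>S. J x)"
    proof (rule INF_greatest)
      fix x assume x: "x \<in> S"
      show "J a \<le> J x" by (rule J_mono[OF a01]) (use x low S_def in auto)
    qed
  qed
  have "eventually (\<lambda>\<theta>. log_scaled (\<gamma> \<theta>) (scaled_law \<theta> (n \<theta>) S) \<le> Lf a \<theta>) at_top"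
    using ev_basic
  proof eventually_elim
    case (elim \<theta>)
    hence t: "\<theta> > 0" "1 \<le> n \<theta>" "\<gamma> \<theta> > 0" by auto
    have K: "Kf a (n \<theta>) \<le> n \<theta>" using Kf_bounds(2)[of a "n \<theta>"] a01 t by auto
    have "0 < Tt \<theta> (n \<theta>) (Kf a (n \<theta>))" by (rule Tt_pos[OF t(1) K])
    moreover have "scaled_law \<theta> (n \<theta>) S \<le> Tt \<theta> (n \<theta>) (Kf a (n \<theta>))"
      by (rule scaled_upper[OF t(1) t(2)]) (use a01 low in auto)
    ultimately show ?case using t(3) by (intro log_scaled_le) auto
  qed
  hence "Limsup at_top (\<lambda>\<theta>. log_scaled (\<gamma> \<theta>) (scaled_law \<theta> (n \<theta>) S)) \<le> Limsup at_top (Lf a)"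
    by (rule Limsup_mono)
  also have "Limsup at_top (Lf a) = - J a" by (rule lim_imp_Limsup[OF _ lim[OF a01]]) simp
  finally show ?thesis using inf S_def by simp
qed

end


lemma exp_m1_le: "exp (-1::real) \<le> 1/2"
proof -
  have "2 \<le> exp (1::real)" using exp_ge_add_one_self[of 1] by simp
  thus ?thesis by (simp add: exp_minus field_simps)
qed

lemma key_ineq: fixes \<delta> nn \<theta> :: real
  assumes d: "\<delta> > 0" and nn: "nn \<ge> 4 / \<delta>" and t: "\<theta> \<ge> 4 / \<delta>" and tp: "\<theta> > 0"
  shows "(\<delta> * nn - 1) * \<theta> / (\<theta> + nn) \<ge> 1"
proof -
  have a: "\<delta> * nn \<ge> 4" using nn d by (simp add: field_simps)
  have b: "\<delta> * \<theta> \<ge> 4" using t d by (simp add: field_simps)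
  have np: "nn > 0" using nn d by (smt (verit) divide_pos_pos)
  have c: "\<delta> * nn * \<theta> \<ge> 4 * \<theta>" using a tp by (simp add: mult_right_mono)
  have e: "\<delta> * nn * \<theta> \<ge> 4 * nn" using b np
    by (metis mult.commute mult.left_commute mult_right_mono less_le)
  have q: "(\<delta> * nn - 1) * \<theta> = \<delta> * nn * \<theta> - \<theta>" by (simp add: algebra_simps)
  have "(\<delta> * nn - 1) * \<theta> \<ge> \<theta> + nn" unfolding q using c e np tp by linarith
  thus ?thesis using np tp by (simp add: field_simps)
qed

context ldp_setup begin

lemma open_point: assumes G: "open G" and x: "x \<in> G" "x \<in> {0..1}"
  shows "- J x \<le> Liminf at_top (\<lambda>\<theta>. log_scaled (\<gamma> \<theta>) (scaled_law \<theta> (n \<theta>) (G \<inter> {0..1})))"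
proof -
  let ?P = "\<lambda>\<theta>. log_scaled (\<gamma> \<theta>) (scaled_law \<theta> (n \<theta>) (G \<inter> {0..1}))"
  consider "J x = \<infinity>" | "x = 1" | "x < 1" "J x \<noteq> \<infinity>" using x by force
  then show ?thesis
  proof cases
    case 1 thus ?thesis by simp
  next
    case 2
    have "eventually (\<lambda>\<theta>. Lf 1 \<theta> \<le> ?P \<theta>) at_top"
      using ev_basic
    proof eventually_elim
      case (elim \<theta>)
      hence t: "\<theta> > 0" "1 \<le> n \<theta>" "\<gamma> \<theta> > 0" by auto
      have p: "0 < Tt \<theta> (n \<theta>) (n \<theta>)" by (rule Tt_pos[OF t(1)]) simp
      have "Tt \<theta> (n \<theta>) (n \<theta>) - Tt \<theta> (n \<theta>) (Suc (n \<theta>)) \<le> scaled_law \<theta> (n \<theta>) (G \<inter> {0..1})"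
      proof (rule scaled_lower[OF t(1)])
        fix k assume "n \<theta> \<le> k" "k < Suc (n \<theta>)"
        hence "k = n \<theta>" by simp
        thus "real k / real (n \<theta>) \<in> G \<inter> {0..1}" using t x 2 by simp
      qed (use t in auto)
      hence "Tt \<theta> (n \<theta>) (n \<theta>) \<le> scaled_law \<theta> (n \<theta>) (G \<inter> {0..1})" using Tt_end[OF t(2)] by simp
      thus ?case using Kf_one[OF t(2)] p t(3) by (simp add: log_scaled_ge)
    qed
    hence "Liminf at_top (Lf 1) \<le> Liminf at_top ?P" by (rule Liminf_mono)
    moreover have "Liminf at_top (Lf 1) = - J 1" by (rule lim_imp_Liminf[OF _ lim]) simp_all
    ultimately show ?thesis using 2 by simp
  next
    case 3
    have x01: "x \<in> {0..1}" using x by simp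
    obtain r where r: "J x = ereal r" using 3 J_nonneg[OF x01] by (cases "J x") auto
    have limr: "((\<lambda>\<theta>. ln (Tt \<theta> (n \<theta>) (Kf x (n \<theta>))) / \<gamma> \<theta>) \<longlongrightarrow> - r) at_top"
      using lim[OF x01] r by (simp add: lim_ereal)
    have l2: "((\<lambda>\<theta>. ln 2 / \<gamma> \<theta>) \<longlongrightarrow> 0) at_top"
      by (rule tendsto_divide_0[OF tendsto_const filterlim_at_top_imp_at_infinity[OF g]])
    have lim2: "((\<lambda>\<theta>. ereal ((ln (Tt \<theta> (n \<theta>) (Kf x (n \<theta>))) - ln 2) / \<gamma> \<theta>)) \<longlongrightarrow> - J x) at_top"
    proof -
      have "((\<lambda>\<theta>. ln (Tt \<theta> (n \<theta>) (Kf x (n \<theta>))) / \<gamma> \<theta> - ln 2 / \<gamma> \<theta>) \<longlongrightarrow> - r - 0) at_top"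
        by (rule tendsto_diff[OF limr l2])
      hence "((\<lambda>\<theta>. (ln (Tt \<theta> (n \<theta>) (Kf x (n \<theta>))) - ln 2) / \<gamma> \<theta>) \<longlongrightarrow> - r) at_top"
        by (simp add: diff_divide_distrib)
      thus ?thesis using r by (simp add: lim_ereal)
    qed
    obtain e where e: "e > 0" "ball x e \<subseteq> G" using G x open_contains_ball by blast
    define \<delta> where "\<delta> = min (e/2) (1 - x)"
    have d: "\<delta> > 0" "\<delta> \<le> 1 - x" "\<delta> < e" using e 3 unfolding \<delta>_def by auto
    have ev: "eventually (\<lambda>\<theta>. (\<theta> > 0 \<and> 1 \<le> n \<theta> \<and> \<gamma> \<theta> > 0) \<and> 4 / \<delta> \<le> real (n \<theta>) \<and> 4 / \<delta> < \<theta>) at_top"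
      using ev_basic ev_nat_ge[OF n, of "4/\<delta>"] eventually_gt_at_top[of "4/\<delta>::real"]
      by eventually_elim auto
    have "eventually (\<lambda>\<theta>. ereal ((ln (Tt \<theta> (n \<theta>) (Kf x (n \<theta>))) - ln 2) / \<gamma> \<theta>) \<le> ?P \<theta>) at_top"
      using ev
    proof eventually_elim
      case (elim \<theta>)
      hence t: "\<theta> > 0" "1 \<le> n \<theta>" "\<gamma> \<theta> > 0" and nb: "4 / \<delta> \<le> real (n \<theta>)" and tb: "4 / \<delta> < \<theta>" by auto
      define N where "N = n \<theta>"
      define k1 where "k1 = Kf x N"
      define k2 where "k2 = nat \<lceil>(x + \<delta>) * real N\<rceil>"
      have N1: "1 \<le> N" using t N_def by simp
      have Np: "real N > 0" using N1 by simp
      have k1b: "1 \<le> k1" "k1 \<le> N" "x * real N \<le> real k1" "real k1 \<le> x * real N + 1"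
        using Kf_bounds[of x N] x01 N1 unfolding k1_def by auto
      have k2a: "(x + \<delta>) * real N \<le> real k2" unfolding k2_def by (rule real_nat_ceiling_ge)
      have k2b: "k2 \<le> N"
      proof -
        have "(x + \<delta>) * real N \<le> real N" using d x01 Np by (simp add: mult_left_le_one_le)
        hence "\<lceil>(x + \<delta>) * real N\<rceil> \<le> int N" by (simp add: ceiling_le_iff)
        thus ?thesis unfolding k2_def by (simp only: nat_le_iff)
      qed
      have dn: "\<delta> * real N \<ge> 4" using nb d(1) N_def by (simp add: field_simps)
      have diff: "real k2 - real k1 \<ge> \<delta> * real N - 1" using k1b k2a by (simp add: algebra_simps)
      have k12: "k1 \<le> k2" using diff dn by linarith
      have rd: "real (k2 - k1) = real k2 - real k1" using k12 by simp
      have ki: "(\<delta> * real N - 1) * \<theta> / (\<theta> + real N) \<ge> 1"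
        by (rule key_ineq[OF d(1)]) (use nb tb t N_def in auto)
      have "(\<delta> * real N - 1) * \<theta> / (\<theta> + real N) \<le> real (k2 - k1) * \<theta> / (\<theta> + real N)"
        unfolding rd using diff t Np by (intro divide_right_mono mult_right_mono) auto
      hence "1 \<le> real (k2 - k1) * \<theta> / (\<theta> + real N)" using ki by linarith
      hence "- real (k2 - k1) * \<theta> / (\<theta> + real N) \<le> -1"
        by (simp only: minus_mult_left minus_divide_left)
      hence "exp (- real (k2 - k1) * \<theta> / (\<theta> + real N)) \<le> exp (-1)" by (simp only: exp_le_cancel_iff)
      hence ex: "exp (- real (k2 - k1) * \<theta> / (\<theta> + real N)) \<le> 1/2" using exp_m1_le by linarith
      have T1p: "Tt \<theta> N k1 > 0" by (rule Tt_pos[OF t(1) k1b(2)])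
      have "Tt \<theta> N k2 \<le> Tt \<theta> N k1 * exp (- real (k2 - k1) * \<theta> / (\<theta> + real N))"
        by (rule Tt_ratio[OF t(1) k1b(1) k12 k2b])
      also have "\<dots> \<le> Tt \<theta> N k1 * (1/2)" using ex T1p by (intro mult_left_mono) auto
      finally have T2: "Tt \<theta> N k2 \<le> Tt \<theta> N k1 / 2" by simp
      have "Tt \<theta> N k1 - Tt \<theta> N k2 \<le> scaled_law \<theta> N (G \<inter> {0..1})"
      proof (rule scaled_lower[OF t(1) k1b(1) k12])
        show "k2 \<le> Suc N" using k2b by simp
        fix k assume kk: "k1 \<le> k" "k < k2"
        have "x * real N \<le> real k" using kk k1b by (meson of_nat_le_iff order_trans)
        hence lo: "x \<le> real k / real N" using Np by (simp add: field_simps)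
        have "int k < \<lceil>(x + \<delta>) * real N\<rceil>" using kk(2) unfolding k2_def by linarith
        hence "real k < (x + \<delta>) * real N" by (simp add: less_ceiling_iff)
        hence hi: "real k / real N < x + \<delta>" using Np by (simp add: field_simps)
        have "real k / real N \<in> ball x e" using lo hi d unfolding ball_def dist_real_def by auto
        hence "real k / real N \<in> G" using e by auto
        moreover have "real k / real N \<in> {0..1}" using lo hi d x01 by auto
        ultimately show "real k / real N \<in> G \<inter> {0..1}" by simp
      qed
      hence Pge: "Tt \<theta> N k1 / 2 \<le> scaled_law \<theta> N (G \<inter> {0..1})" using T2 by simp
      have "ereal (ln (Tt \<theta> N k1 / 2) / \<gamma> \<theta>) \<le> log_scaled (\<gamma> \<theta>) (scaled_law \<theta> N (G \<inter> {0..1}))"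
        by (rule log_scaled_ge[OF t(3) Pge]) (use T1p in simp)
      moreover have "ln (Tt \<theta> N k1 / 2) = ln (Tt \<theta> N k1) - ln 2" using T1p by (simp add: ln_div)
      ultimately show ?case unfolding N_def k1_def by simp
    qed
    hence "Liminf at_top (\<lambda>\<theta>. ereal ((ln (Tt \<theta> (n \<theta>) (Kf x (n \<theta>))) - ln 2) / \<gamma> \<theta>)) \<le> Liminf at_top ?P"
      by (rule Liminf_mono)
    moreover have "Liminf at_top (\<lambda>\<theta>. ereal ((ln (Tt \<theta> (n \<theta>) (Kf x (n \<theta>))) - ln 2) / \<gamma> \<theta>)) = - J x"
      by (rule lim_imp_Liminf[OF _ lim2]) simp
    ultimately show ?thesis by simp
  qed
qed

lemma open_part: assumes G: "open G"
  shows "- (INF x\<in>G \<inter> {0..1}. J x) \<le> Liminf at_top (\<lambda>\<theta>. log_scaled (\<gamma> \<theta>) (scaled_law \<theta> (n \<theta>) (G \<inter> {0..1})))"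
proof -
  let ?L = "Liminf at_top (\<lambda>\<theta>. log_scaled (\<gamma> \<theta>) (scaled_law \<theta> (n \<theta>) (G \<inter> {0..1})))"
  have "- ?L \<le> (INF x\<in>G \<inter> {0..1}. J x)"
  proof (rule INF_greatest)
    fix x assume "x \<in> G \<inter> {0..1}"
    hence "- J x \<le> ?L" using open_point[OF G] by auto
    thus "- ?L \<le> J x" by (simp add: ereal_uminus_le_reorder)
  qed
  thus ?thesis by (simp add: ereal_uminus_le_reorder)
qed

lemma LDP: assumes cl: "\<And>b. closed {x\<in>{0..1}. J x \<le> b}"
  shows "LDP01 (\<lambda>\<theta>. scaled_law \<theta> (n \<theta>)) \<gamma> J"
  unfolding LDP01_def using J_nonneg cl closed_part open_part by blast

end



lemma xlogx_eq: "xlogx t = t * ln t"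
  by (simp add: xlogx_def)

lemma xlogx_cont: "continuous_on {0..} xlogx"
proof -
  have "continuous (at x within {0..}) (\<lambda>t::real. t * ln t)" if "x \<in> {0..}" for x
  proof (cases "x = 0")
    case True
    have "((\<lambda>t::real. t * ln t) \<longlongrightarrow> 0) (at_right 0)" by real_asymp
    thus ?thesis using True by (simp add: continuous_within at_within_Ici_at_right)
  next
    case False
    hence "x > 0" using that by simp
    hence "isCont (\<lambda>t::real. t * ln t) x" by (intro continuous_intros) auto
    thus ?thesis by (rule continuous_at_imp_continuous_at_within)
  qed
  hence "continuous_on {0..} (\<lambda>t::real. t * ln t)" by (simp add: continuous_on_eq_continuous_within)
  thus ?thesis by (simp add: xlogx_eq[abs_def])
qed

lemma tendsto_xlogx: assumes "(g \<longlongrightarrow> L) F" "L \<ge> 0" "eventually (\<lambda>x. g x \<ge> 0) F"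
  shows "((\<lambda>x. xlogx (g x)) \<longlongrightarrow> xlogx L) F"
  by (rule continuous_on_tendsto_compose[OF xlogx_cont assms(1)]) (use assms in auto)

lemma xlogx_scale: assumes "N > 0" "t \<ge> 0" shows "xlogx (N * t) = N * xlogx t + N * t * ln N"
proof (cases "t = 0")
  case True thus ?thesis by (simp add: xlogx_def)
next
  case False
  hence "t > 0" using assms by simp
  thus ?thesis using assms by (simp add: xlogx_eq ln_mult algebra_simps)
qed

lemma xlogx_four: assumes "N > 0" "t1 \<ge> 0" "t2 \<ge> 0" "t3 \<ge> 0" "t4 \<ge> 0" "t1 - t2 - t3 + t4 = 0"
  shows "xlogx (N * t1) - xlogx (N * t2) - xlogx (N * t3) + xlogx (N * t4)
     = N * (xlogx t1 - xlogx t2 - xlogx t3 + xlogx t4)"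
proof -
  have e: "xlogx (N * t1) - xlogx (N * t2) - xlogx (N * t3) + xlogx (N * t4)
      = N * (xlogx t1 - xlogx t2 - xlogx t3 + xlogx t4) + N * ln N * (t1 - t2 - t3 + t4)"
    using assms(1-5) by (simp add: xlogx_scale algebra_simps)
  have z: "N * ln N * (t1 - t2 - t3 + t4) = 0" using assms(6) by (simp only: mult_zero_right)
  show ?thesis unfolding e z by simp
qed

definition Fx :: "real \<Rightarrow> real" where "Fx y = xlogx y - y"

lemma E1: assumes "y > 0" shows "ln y \<le> Fx (y + 1) - Fx y"
proof -
  have "ln (y / (y + 1)) \<le> y / (y + 1) - 1" using assms by (intro ln_le_minus_one) simp
  hence "ln y - ln (y + 1) \<le> - 1 / (y + 1)" using assms by (simp add: ln_div field_simps)
  hence "(y + 1) * (ln y - ln (y + 1)) \<le> -1" using assms by (simp add: field_simps)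
  thus ?thesis using assms unfolding Fx_def by (simp add: xlogx_eq algebra_simps)
qed

lemma E2: assumes "y \<ge> 1" shows "Fx y - Fx (y - 1) \<le> ln y"
proof (cases "y = 1")
  case True thus ?thesis by (simp add: Fx_def xlogx_def)
next
  case False
  hence y: "y > 1" using assms by simp
  have "ln (y / (y - 1)) \<le> y / (y - 1) - 1" using y by (intro ln_le_minus_one) simp
  hence "ln y - ln (y - 1) \<le> 1 / (y - 1)" using y by (simp add: ln_div field_simps)
  hence "(y - 1) * (ln y - ln (y - 1)) \<le> 1" using y by (simp add: field_simps)
  thus ?thesis using y unfolding Fx_def by (simp add: xlogx_eq algebra_simps)
qed

lemma tele_up: assumes "\<And>j. 1 \<le> j \<Longrightarrow> j < K \<Longrightarrow> f j \<le> g j - g (Suc j)" "1 \<le> K"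
  shows "(\<Sum>j\<in>{1..<K}. f j) \<le> g 1 - (g K :: real)"
  using assms(2,1)
proof (induction K rule: dec_induct)
  case base thus ?case by simp
next
  case (step k)
  have "(\<Sum>j\<in>{1..<Suc k}. f j) = (\<Sum>j\<in>{1..<k}. f j) + f k" using step by simp
  also have "\<dots> \<le> (g 1 - g k) + (g k - g (Suc k))" using step by (intro add_mono) auto
  finally show ?case by simp
qed

lemma tele_low: assumes "\<And>j. 1 \<le> j \<Longrightarrow> j < K \<Longrightarrow> g j - g (Suc j) \<le> f j" "1 \<le> K"
  shows "g 1 - (g K :: real) \<le> (\<Sum>j\<in>{1..<K}. f j)"
proof -
  have "(\<Sum>j\<in>{1..<K}. - f j) \<le> (- g 1) - (- g K)"
  proof (rule tele_up[of K "\<lambda>j. - f j" "\<lambda>j. - g j", OF _ assms(2)])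
    fix j assume "1 \<le> j" "j < K"
    from assms(1)[OF this] show "- f j \<le> - g j - - g (Suc j)" by simp
  qed
  thus ?thesis by (simp add: sum_negf)
qed

lemma sumln_upper: assumes "A - real K + 1 > 0" "1 \<le> K"
  shows "(\<Sum>j\<in>{1..<K}. ln (A - real j)) \<le> Fx A - Fx (A - real K + 1)"
proof -
  have "(\<Sum>j\<in>{1..<K}. ln (A - real j)) \<le> Fx (A - real (1::nat) + 1) - Fx (A - real K + 1)"
  proof (rule tele_up[of K "\<lambda>j. ln (A - real j)" "\<lambda>j. Fx (A - real j + 1)", OF _ assms(2)])
    fix j assume j: "1 \<le> j" "j < K"
    have "A - real j > 0" using j assms by simp
    from E1[OF this] show "ln (A - real j) \<le> Fx (A - real j + 1) - Fx (A - real (Suc j) + 1)"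
      by (simp add: algebra_simps)
  qed
  thus ?thesis by simp
qed

lemma sumln_lower: assumes "A \<ge> real K" "1 \<le> K"
  shows "Fx (A - 1) - Fx (A - real K) \<le> (\<Sum>j\<in>{1..<K}. ln (A - real j))"
proof -
  have "Fx (A - real (1::nat)) - Fx (A - real K) \<le> (\<Sum>j\<in>{1..<K}. ln (A - real j))"
  proof (rule tele_low[of K "\<lambda>j. Fx (A - real j)" "\<lambda>j. ln (A - real j)", OF _ assms(2)])
    fix j assume j: "1 \<le> j" "j < K"
    have "A - real j \<ge> 1" using j assms by simp
    from E2[OF this] show "Fx (A - real j) - Fx (A - real (Suc j)) \<le> ln (A - real j)"
      by (simp add: algebra_simps)
  qed
  thus ?thesis by simp
qed


lemma sum_ln_Tt: assumes "\<theta> > 0" "K \<le> N"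
  shows "ln (Tt \<theta> N K) = (\<Sum>j\<in>{1..<K}. ln (real N - real j)) - (\<Sum>j\<in>{1..<K}. ln (\<theta> + real N - real j))"
  using ln_Tt[OF assms] by (simp add: sum_subtractf)

lemma C_upper: assumes t: "\<theta> > 0" and K: "1 \<le> K" "K \<le> N"
  shows "ln (Tt \<theta> N K) / \<theta> \<le> (xlogx 1 - xlogx (1 - real K / real N + 1 / real N)
           - xlogx (\<theta> / real N + 1 - 1 / real N) + xlogx (\<theta> / real N + 1 - real K / real N)) / (\<theta> / real N)"
proof -
  have Np: "real N > 0" using K by simp
  have KN: "real K \<le> real N" using K by simp
  have s1: "(\<Sum>j\<in>{1..<K}. ln (real N - real j)) \<le> Fx (real N) - Fx (real N - real K + 1)"
    by (rule sumln_upper) (use K in auto)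
  have s2: "Fx (\<theta> + real N - 1) - Fx (\<theta> + real N - real K) \<le> (\<Sum>j\<in>{1..<K}. ln (\<theta> + real N - real j))"
    by (rule sumln_lower) (use K t in auto)
  have "ln (Tt \<theta> N K) \<le> Fx (real N) - Fx (real N - real K + 1) - (Fx (\<theta> + real N - 1) - Fx (\<theta> + real N - real K))"
    unfolding sum_ln_Tt[OF t K(2)] using s1 s2 by linarith
  also have "\<dots> = xlogx (real N * 1) - xlogx (real N * (1 - real K / real N + 1 / real N))
           - xlogx (real N * (\<theta> / real N + 1 - 1 / real N)) + xlogx (real N * (\<theta> / real N + 1 - real K / real N))"
  proof -
    have e1: "real N * (1 - real K / real N + 1 / real N) = real N - real K + 1" using Np by (simp add: field_simps)
    have e2: "real N * (\<theta> / real N + 1 - 1 / real N) = \<theta> + real N - 1" using Np by (simp add: field_simps)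
    have e3: "real N * (\<theta> / real N + 1 - real K / real N) = \<theta> + real N - real K" using Np by (simp add: field_simps)
    show ?thesis unfolding e1 e2 e3 by (simp add: Fx_def algebra_simps)
  qed
  also have "\<dots> = real N * (xlogx 1 - xlogx (1 - real K / real N + 1 / real N)
           - xlogx (\<theta> / real N + 1 - 1 / real N) + xlogx (\<theta> / real N + 1 - real K / real N))"
  proof (rule xlogx_four)
    have uk: "real K / real N \<le> 1" using Np KN by simp
    have vk: "1 / real N \<le> 1" using K by simp
    have qk: "\<theta> / real N > 0" using t Np by simp
    have vp: "1 / real N > 0" using Np by simp
    show "0 < real N" by (rule Np)
    show "0 \<le> (1::real)" by simp
    show "0 \<le> 1 - real K / real N + 1 / real N" using uk vp by linarith
    show "0 \<le> \<theta> / real N + 1 - 1 / real N" using qk vk by linarith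
    show "0 \<le> \<theta> / real N + 1 - real K / real N" using qk uk by linarith
    show "1 - (1 - real K / real N + 1 / real N) - (\<theta> / real N + 1 - 1 / real N) + (\<theta> / real N + 1 - real K / real N) = 0"
      by simp
  qed
  finally have h: "ln (Tt \<theta> N K) \<le> real N * (xlogx 1 - xlogx (1 - real K / real N + 1 / real N)
           - xlogx (\<theta> / real N + 1 - 1 / real N) + xlogx (\<theta> / real N + 1 - real K / real N))" .
  have "ln (Tt \<theta> N K) / \<theta> \<le> real N * (xlogx 1 - xlogx (1 - real K / real N + 1 / real N)
           - xlogx (\<theta> / real N + 1 - 1 / real N) + xlogx (\<theta> / real N + 1 - real K / real N)) / \<theta>"
    using h t by (rule divide_right_mono[OF _ less_imp_le])
  also have "\<dots> = (xlogx 1 - xlogx (1 - real K / real N + 1 / real N)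
           - xlogx (\<theta> / real N + 1 - 1 / real N) + xlogx (\<theta> / real N + 1 - real K / real N)) / (\<theta> / real N)"
    by (simp add: field_simps)
  finally show ?thesis .
qed

lemma C_lower: assumes t: "\<theta> > 0" and K: "1 \<le> K" "K \<le> N"
  shows "(xlogx (1 - 1 / real N) - xlogx (1 - real K / real N)
           - xlogx (\<theta> / real N + 1) + xlogx (\<theta> / real N + 1 - real K / real N + 1 / real N)) / (\<theta> / real N)
         \<le> ln (Tt \<theta> N K) / \<theta>"
proof -
  have Np: "real N > 0" using K by simp
  have KN: "real K \<le> real N" using K by simp
  have s1: "Fx (real N - 1) - Fx (real N - real K) \<le> (\<Sum>j\<in>{1..<K}. ln (real N - real j))"
    by (rule sumln_lower) (use K in auto)
  have s2: "(\<Sum>j\<in>{1..<K}. ln (\<theta> + real N - real j)) \<le> Fx (\<theta> + real N) - Fx (\<theta> + real N - real K + 1)"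
    by (rule sumln_upper) (use K t in auto)
  have "real N * (xlogx (1 - 1 / real N) - xlogx (1 - real K / real N)
           - xlogx (\<theta> / real N + 1) + xlogx (\<theta> / real N + 1 - real K / real N + 1 / real N))
       = xlogx (real N * (1 - 1 / real N)) - xlogx (real N * (1 - real K / real N))
           - xlogx (real N * (\<theta> / real N + 1)) + xlogx (real N * (\<theta> / real N + 1 - real K / real N + 1 / real N))"
  proof (rule xlogx_four[symmetric])
    have uk: "real K / real N \<le> 1" using Np KN by simp
    have vk: "1 / real N \<le> 1" using K by simp
    have qk: "\<theta> / real N > 0" using t Np by simp
    have vp: "1 / real N > 0" using Np by simp
    show "0 < real N" by (rule Np)
    show "0 \<le> 1 - 1 / real N" using vk by linarith
    show "0 \<le> 1 - real K / real N" using uk by linarith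
    show "0 \<le> \<theta> / real N + 1" using qk by linarith
    show "0 \<le> \<theta> / real N + 1 - real K / real N + 1 / real N" using qk uk vp by linarith
    show "1 - 1 / real N - (1 - real K / real N) - (\<theta> / real N + 1) + (\<theta> / real N + 1 - real K / real N + 1 / real N) = 0"
      by simp
  qed
  also have "\<dots> = Fx (real N - 1) - Fx (real N - real K) - (Fx (\<theta> + real N) - Fx (\<theta> + real N - real K + 1))"
  proof -
    have e1: "real N * (1 - 1 / real N) = real N - 1" using Np by (simp add: field_simps)
    have e2: "real N * (1 - real K / real N) = real N - real K" using Np by (simp add: field_simps)
    have e3: "real N * (\<theta> / real N + 1) = \<theta> + real N" using Np by (simp add: field_simps)
    have e4: "real N * (\<theta> / real N + 1 - real K / real N + 1 / real N) = \<theta> + real N - real K + 1" using Np by (simp add: field_simps)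
    show ?thesis unfolding e1 e2 e3 e4 by (simp add: Fx_def algebra_simps)
  qed
  also have "\<dots> \<le> ln (Tt \<theta> N K)"
    unfolding sum_ln_Tt[OF t K(2)] using s1 s2 by linarith
  finally have h: "real N * (xlogx (1 - 1 / real N) - xlogx (1 - real K / real N)
           - xlogx (\<theta> / real N + 1) + xlogx (\<theta> / real N + 1 - real K / real N + 1 / real N)) \<le> ln (Tt \<theta> N K)" .
  have "(xlogx (1 - 1 / real N) - xlogx (1 - real K / real N)
           - xlogx (\<theta> / real N + 1) + xlogx (\<theta> / real N + 1 - real K / real N + 1 / real N)) / (\<theta> / real N)
      = real N * (xlogx (1 - 1 / real N) - xlogx (1 - real K / real N)
           - xlogx (\<theta> / real N + 1) + xlogx (\<theta> / real N + 1 - real K / real N + 1 / real N)) / \<theta>"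
    by (simp add: field_simps)
  also have "\<dots> \<le> ln (Tt \<theta> N K) / \<theta>"
    using h t by (rule divide_right_mono[OF _ less_imp_le])
  finally show ?thesis .
qed

lemma nreal_top: "filterlim (n :: real \<Rightarrow> nat) at_top at_top \<Longrightarrow> filterlim (\<lambda>\<theta>. real (n \<theta>)) at_top at_top"
  by (rule filterlim_compose[OF filterlim_real_sequentially])

lemma inv_n_0: "filterlim (n :: real \<Rightarrow> nat) at_top at_top \<Longrightarrow> ((\<lambda>\<theta>. 1 / real (n \<theta>)) \<longlongrightarrow> 0) at_top"
  by (rule tendsto_divide_0[OF tendsto_const filterlim_at_top_imp_at_infinity[OF nreal_top]])

lemma ev_n1: "filterlim (n :: real \<Rightarrow> nat) at_top at_top \<Longrightarrow> eventually (\<lambda>\<theta>. 1 \<le> n \<theta>) at_top"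
  by (simp add: filterlim_at_top)

lemma u_lim: assumes n: "filterlim (n :: real \<Rightarrow> nat) at_top at_top" and a: "0 \<le> a" "a \<le> 1"
  shows "((\<lambda>\<theta>. real (Kf a (n \<theta>)) / real (n \<theta>)) \<longlongrightarrow> a) at_top"
proof (rule tendsto_sandwich[where f = "\<lambda>_. a" and h = "\<lambda>\<theta>. a + 1 / real (n \<theta>)"])
  show "eventually (\<lambda>\<theta>. a \<le> real (Kf a (n \<theta>)) / real (n \<theta>)) at_top"
    using ev_n1[OF n] by eventually_elim (use Kf_bounds(3)[OF a] in \<open>auto simp: field_simps\<close>)
  show "eventually (\<lambda>\<theta>. real (Kf a (n \<theta>)) / real (n \<theta>) \<le> a + 1 / real (n \<theta>)) at_top"
    using ev_n1[OF n] by eventually_elim (use Kf_bounds(4)[OF a] in \<open>auto simp: field_simps\<close>)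
  show "((\<lambda>\<theta>. a + 1 / real (n \<theta>)) \<longlongrightarrow> a) at_top"
    using tendsto_add[OF tendsto_const inv_n_0[OF n], of a] by simp
qed simp

definition rC :: "real \<Rightarrow> real \<Rightarrow> real" where
  "rC c x = (1 / c) * (xlogx (c + 1) + xlogx (1 - x) - xlogx (c + 1 - x))"

lemma caseC_lim: assumes n: "filterlim (n :: real \<Rightarrow> nat) at_top at_top"
  and r: "((\<lambda>\<theta>. \<theta> / real (n \<theta>)) \<longlongrightarrow> c) at_top" and c: "c > 0" and a: "0 \<le> a" "a \<le> 1"
  shows "((\<lambda>\<theta>. ln (Tt \<theta> (n \<theta>) (Kf a (n \<theta>))) / \<theta>) \<longlongrightarrow> - rC c a) at_top"
proof -
  define u where "u = (\<lambda>\<theta>. real (Kf a (n \<theta>)) / real (n \<theta>))"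
  define v where "v = (\<lambda>\<theta>. 1 / real (n \<theta>))"
  define q where "q = (\<lambda>\<theta>. \<theta> / real (n \<theta>))"
  have ul: "(u \<longlongrightarrow> a) at_top" unfolding u_def by (rule u_lim[OF n a])
  have vl: "(v \<longlongrightarrow> 0) at_top" unfolding v_def by (rule inv_n_0[OF n])
  have ql: "(q \<longlongrightarrow> c) at_top" unfolding q_def by (rule r)
  have ev: "eventually (\<lambda>\<theta>. \<theta> > 0 \<and> 1 \<le> n \<theta>) at_top"
    using ev_n1[OF n] eventually_gt_at_top[of "0::real"] by eventually_elim auto
  have evb: "eventually (\<lambda>\<theta>. 0 \<le> u \<theta> \<and> u \<theta> \<le> 1 \<and> 0 < v \<theta> \<and> v \<theta> \<le> 1 \<and> 0 < q \<theta>) at_top"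
    using ev
  proof eventually_elim
    case (elim \<theta>)
    hence t: "\<theta> > 0" "1 \<le> n \<theta>" by auto
    have "Kf a (n \<theta>) \<le> n \<theta>" using Kf_bounds(2)[OF a t(2)] .
    thus ?case using t unfolding u_def v_def q_def by (auto simp: field_simps)
  qed
  let ?U = "\<lambda>\<theta>. (xlogx 1 - xlogx (1 - u \<theta> + v \<theta>) - xlogx (q \<theta> + 1 - v \<theta>) + xlogx (q \<theta> + 1 - u \<theta>)) / q \<theta>"
  let ?L = "\<lambda>\<theta>. (xlogx (1 - v \<theta>) - xlogx (1 - u \<theta>) - xlogx (q \<theta> + 1) + xlogx (q \<theta> + 1 - u \<theta> + v \<theta>)) / q \<theta>"
  have x10: "xlogx 1 = 0" by (simp add: xlogx_def)
  have lim_val: "(xlogx 1 - xlogx (1 - a + 0) - xlogx (c + 1 - 0) + xlogx (c + 1 - a)) / c = - rC c a"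
    "(xlogx (1 - 0) - xlogx (1 - a) - xlogx (c + 1) + xlogx (c + 1 - a + 0)) / c = - rC c a"
    unfolding rC_def using c by (simp_all add: x10 field_simps)
  have x1: "((\<lambda>\<theta>. xlogx (1 - u \<theta> + v \<theta>)) \<longlongrightarrow> xlogx (1 - a + 0)) at_top"
    by (rule tendsto_xlogx[OF tendsto_add[OF tendsto_diff[OF tendsto_const ul] vl]]) (use a c evb in \<open>auto elim: eventually_mono\<close>)
  have x2: "((\<lambda>\<theta>. xlogx (q \<theta> + 1 - v \<theta>)) \<longlongrightarrow> xlogx (c + 1 - 0)) at_top"
    by (rule tendsto_xlogx[OF tendsto_diff[OF tendsto_add[OF ql tendsto_const] vl]]) (use a c evb in \<open>auto elim: eventually_mono\<close>)
  have x3: "((\<lambda>\<theta>. xlogx (q \<theta> + 1 - u \<theta>)) \<longlongrightarrow> xlogx (c + 1 - a)) at_top"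
    by (rule tendsto_xlogx[OF tendsto_diff[OF tendsto_add[OF ql tendsto_const] ul]]) (use a c evb in \<open>auto elim: eventually_mono\<close>)
  have x4: "((\<lambda>\<theta>. xlogx (1 - v \<theta>)) \<longlongrightarrow> xlogx (1 - 0)) at_top"
    by (rule tendsto_xlogx[OF tendsto_diff[OF tendsto_const vl]]) (use a c evb in \<open>auto elim: eventually_mono\<close>)
  have x5: "((\<lambda>\<theta>. xlogx (1 - u \<theta>)) \<longlongrightarrow> xlogx (1 - a)) at_top"
    by (rule tendsto_xlogx[OF tendsto_diff[OF tendsto_const ul]]) (use a c evb in \<open>auto elim: eventually_mono\<close>)
  have x6: "((\<lambda>\<theta>. xlogx (q \<theta> + 1)) \<longlongrightarrow> xlogx (c + 1)) at_top"
    by (rule tendsto_xlogx[OF tendsto_add[OF ql tendsto_const]]) (use a c evb in \<open>auto elim: eventually_mono\<close>)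
  have x7: "((\<lambda>\<theta>. xlogx (q \<theta> + 1 - u \<theta> + v \<theta>)) \<longlongrightarrow> xlogx (c + 1 - a + 0)) at_top"
    by (rule tendsto_xlogx[OF tendsto_add[OF tendsto_diff[OF tendsto_add[OF ql tendsto_const] ul] vl]]) (use a c evb in \<open>auto elim: eventually_mono\<close>)
  have Ul: "(?U \<longlongrightarrow> - rC c a) at_top"
    unfolding lim_val(1)[symmetric] using c
    by (intro tendsto_divide tendsto_add tendsto_diff x1 x2 x3 ql tendsto_const) auto
  have Ll: "(?L \<longlongrightarrow> - rC c a) at_top"
    unfolding lim_val(2)[symmetric] using c
    by (intro tendsto_divide tendsto_add tendsto_diff x4 x5 x6 x7 ql) auto
  show ?thesis
  proof (rule tendsto_sandwich[OF _ _ Ll Ul])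
    show "eventually (\<lambda>\<theta>. ?L \<theta> \<le> ln (Tt \<theta> (n \<theta>) (Kf a (n \<theta>))) / \<theta>) at_top"
      using ev
    proof eventually_elim
      case (elim \<theta>)
      hence t: "\<theta> > 0" "1 \<le> n \<theta>" by auto
      show ?case unfolding u_def v_def q_def
        by (rule C_lower[OF t(1)]) (use Kf_bounds[OF a t(2)] in auto)
    qed
    show "eventually (\<lambda>\<theta>. ln (Tt \<theta> (n \<theta>) (Kf a (n \<theta>))) / \<theta> \<le> ?U \<theta>) at_top"
      using ev
    proof eventually_elim
      case (elim \<theta>)
      hence t: "\<theta> > 0" "1 \<le> n \<theta>" by auto
      show ?case unfolding u_def v_def q_def
        by (rule C_upper[OF t(1)]) (use Kf_bounds[OF a t(2)] in auto)
    qed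
  qed
qed


lemma D_upper: assumes t: "\<theta> > 0" and K: "1 \<le> K" "K \<le> N"
  shows "ln (Tt \<theta> N K) / \<theta> \<le> ln ((\<theta> + real N - real K + 1) / (\<theta> + real N))"
proof -
  have "(\<Sum>j\<in>{1..<K}. ln (real N - real j) - ln (\<theta> + real N - real j))
     \<le> (- \<theta> * ln (\<theta> + real N - real (1::nat) + 1)) - (- \<theta> * ln (\<theta> + real N - real K + 1))"
  proof (rule tele_up[of K _ "\<lambda>j. - \<theta> * ln (\<theta> + real N - real j + 1)", OF _ K(1)])
    fix j assume j: "1 \<le> j" "j < K"
    define y where "y = real N - real j"
    have y: "y > 0" using j K unfolding y_def by simp
    have a1: "ln (y / (\<theta> + y)) \<le> y / (\<theta> + y) - 1" using y t by (intro ln_le_minus_one) simp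
    have a2: "ln ((\<theta> + y + 1) / (\<theta> + y)) \<le> (\<theta> + y + 1) / (\<theta> + y) - 1" using y t by (intro ln_le_minus_one) simp
    have b1: "ln y - ln (\<theta> + y) \<le> - \<theta> / (\<theta> + y)" using a1 y t by (simp add: ln_div field_simps)
    have b2: "ln (\<theta> + y + 1) - ln (\<theta> + y) \<le> 1 / (\<theta> + y)" using a2 y t by (simp add: ln_div field_simps)
    have b3: "\<theta> * (ln (\<theta> + y + 1) - ln (\<theta> + y)) \<le> \<theta> / (\<theta> + y)"
      using mult_left_mono[OF b2, of \<theta>] t by simp
    have "ln y - ln (\<theta> + y) \<le> - \<theta> * ln (\<theta> + y + 1) + \<theta> * ln (\<theta> + y)"
      using b1 b3 by (simp add: algebra_simps)
    thus "ln (real N - real j) - ln (\<theta> + real N - real j)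
        \<le> - \<theta> * ln (\<theta> + real N - real j + 1) - - \<theta> * ln (\<theta> + real N - real (Suc j) + 1)"
      unfolding y_def by (simp add: algebra_simps)
  qed
  hence "ln (Tt \<theta> N K) \<le> \<theta> * (ln (\<theta> + real N - real K + 1) - ln (\<theta> + real N))"
    unfolding ln_Tt[OF t K(2)] by (simp add: algebra_simps)
  hence "ln (Tt \<theta> N K) / \<theta> \<le> ln (\<theta> + real N - real K + 1) - ln (\<theta> + real N)"
    using t by (simp add: field_simps)
  also have "\<dots> = ln ((\<theta> + real N - real K + 1) / (\<theta> + real N))"
    using t K by (simp add: ln_div)
  finally show ?thesis .
qed

lemma D_lower: assumes t: "\<theta> > 0" and K: "1 \<le> K" "K < N"
  shows "ln ((real N - real K) / (real N - 1)) \<le> ln (Tt \<theta> N K) / \<theta>"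
proof -
  have "(- \<theta> * ln (real N - real (1::nat))) - (- \<theta> * ln (real N - real K))
     \<le> (\<Sum>j\<in>{1..<K}. ln (real N - real j) - ln (\<theta> + real N - real j))"
  proof (rule tele_low[of K "\<lambda>j. - \<theta> * ln (real N - real j)", OF _ K(1)])
    fix j assume j: "1 \<le> j" "j < K"
    define y where "y = real N - real j"
    have y: "y > 1" using j K unfolding y_def by simp
    have a1: "ln (1 + \<theta> / y) \<le> \<theta> / y" using y t by (intro ln_add_one_self_le_self) simp
    have a2: "ln ((y - 1) / y) \<le> (y - 1) / y - 1" using y by (intro ln_le_minus_one) simp
    have b1: "ln (\<theta> + y) - ln y \<le> \<theta> / y"
    proof -
      have "1 + \<theta> / y = (\<theta> + y) / y" using y by (simp add: field_simps)
      thus ?thesis using a1 y t by (simp add: ln_div)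
    qed
    have b2: "1 / y \<le> ln y - ln (y - 1)" using a2 y by (simp add: ln_div field_simps)
    have b3: "\<theta> / y \<le> \<theta> * (ln y - ln (y - 1))"
      using mult_left_mono[OF b2, of \<theta>] t by simp
    have "- \<theta> * ln y + \<theta> * ln (y - 1) \<le> ln y - ln (\<theta> + y)"
      using b1 b3 by (simp add: algebra_simps)
    thus "- \<theta> * ln (real N - real j) - - \<theta> * ln (real N - real (Suc j))
        \<le> ln (real N - real j) - ln (\<theta> + real N - real j)"
      unfolding y_def by (simp add: algebra_simps)
  qed
  hence "\<theta> * (ln (real N - real K) - ln (real N - 1)) \<le> ln (Tt \<theta> N K)"
    unfolding ln_Tt[OF t less_imp_le[OF K(2)]] by (simp add: algebra_simps)
  hence "ln (real N - real K) - ln (real N - 1) \<le> ln (Tt \<theta> N K) / \<theta>"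
    using t by (simp add: field_simps)
  moreover have "ln (real N - real K) - ln (real N - 1) = ln ((real N - real K) / (real N - 1))"
    using K by (simp add: ln_div)
  ultimately show ?thesis by simp
qed


lemma caseD_lim: assumes n: "filterlim (n :: real \<Rightarrow> nat) at_top at_top"
  and r: "((\<lambda>\<theta>. \<theta> / real (n \<theta>)) \<longlongrightarrow> 0) at_top" and a: "0 \<le> a" "a < 1"
  shows "((\<lambda>\<theta>. ln (Tt \<theta> (n \<theta>) (Kf a (n \<theta>))) / \<theta>) \<longlongrightarrow> ln (1 - a)) at_top"
proof -
  define u where "u = (\<lambda>\<theta>. real (Kf a (n \<theta>)) / real (n \<theta>))"
  define v where "v = (\<lambda>\<theta>. 1 / real (n \<theta>))"
  define q where "q = (\<lambda>\<theta>. \<theta> / real (n \<theta>))"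
  have ul: "(u \<longlongrightarrow> a) at_top" unfolding u_def by (rule u_lim[OF n]) (use a in auto)
  have vl: "(v \<longlongrightarrow> 0) at_top" unfolding v_def by (rule inv_n_0[OF n])
  have ql: "(q \<longlongrightarrow> 0) at_top" unfolding q_def by (rule r)
  have eu: "eventually (\<lambda>\<theta>. u \<theta> < 1) at_top" using order_tendstoD(2)[OF ul a(2)] .
  have ev2: "eventually (\<lambda>\<theta>. 2 \<le> real (n \<theta>)) at_top"
    using filterlim_at_top[THEN iffD1, OF nreal_top[OF n]] by blast
  have ev: "eventually (\<lambda>\<theta>. \<theta> > 0 \<and> 2 \<le> real (n \<theta>) \<and> u \<theta> < 1) at_top"
    using ev2 eu eventually_gt_at_top[of "0::real"] by eventually_elim auto
  let ?U = "\<lambda>\<theta>. ln (1 - (u \<theta> - v \<theta>) / (q \<theta> + 1))"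
  let ?L = "\<lambda>\<theta>. ln ((1 - u \<theta>) / (1 - v \<theta>))"
  have Ul: "(?U \<longlongrightarrow> ln (1 - (a - 0) / (0 + 1))) at_top"
    by (intro tendsto_ln tendsto_diff tendsto_divide tendsto_add tendsto_const ul vl ql) (use a in auto)
  have Ll: "(?L \<longlongrightarrow> ln ((1 - a) / (1 - 0))) at_top"
    by (intro tendsto_ln tendsto_diff tendsto_divide tendsto_add tendsto_const ul vl ql) (use a in auto)
  show ?thesis
  proof (rule tendsto_sandwich[OF _ _ _ _])
    show "((\<lambda>\<theta>. ?L \<theta>) \<longlongrightarrow> ln (1 - a)) at_top" using Ll by simp
    show "((\<lambda>\<theta>. ?U \<theta>) \<longlongrightarrow> ln (1 - a)) at_top" using Ul by simp
    show "eventually (\<lambda>\<theta>. ?L \<theta> \<le> ln (Tt \<theta> (n \<theta>) (Kf a (n \<theta>))) / \<theta>) at_top"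
      using ev
    proof eventually_elim
      case (elim \<theta>)
      hence t: "\<theta> > 0" "2 \<le> real (n \<theta>)" "u \<theta> < 1" by auto
      have N1: "1 \<le> n \<theta>" using t by simp
      have Np: "real (n \<theta>) > 0" using t by simp
      have Klt: "Kf a (n \<theta>) < n \<theta>" using t(3) Np unfolding u_def by (simp add: field_simps)
      have "(1 - u \<theta>) / (1 - v \<theta>) = (real (n \<theta>) - real (Kf a (n \<theta>))) / (real (n \<theta>) - 1)"
      proof -
        have d: "real (n \<theta>) - 1 > 0" using t by simp
        show ?thesis unfolding u_def v_def using Np d by (simp add: field_simps)
      qed
      thus ?case using D_lower[OF t(1) Kf_bounds(1)[OF a(1) less_imp_le[OF a(2)] N1] Klt] by simp
    qed
    show "eventually (\<lambda>\<theta>. ln (Tt \<theta> (n \<theta>) (Kf a (n \<theta>))) / \<theta> \<le> ?U \<theta>) at_top"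
      using ev
    proof eventually_elim
      case (elim \<theta>)
      hence t: "\<theta> > 0" "2 \<le> real (n \<theta>)" by auto
      have N1: "1 \<le> n \<theta>" using t by simp
      have Np: "real (n \<theta>) > 0" using t by simp
      have "1 - (u \<theta> - v \<theta>) / (q \<theta> + 1) = (\<theta> + real (n \<theta>) - real (Kf a (n \<theta>)) + 1) / (\<theta> + real (n \<theta>))"
      proof -
        have d2: "\<theta> + real (n \<theta>) > 0" using t by simp
        have e1: "u \<theta> - v \<theta> = (real (Kf a (n \<theta>)) - 1) / real (n \<theta>)"
          unfolding u_def v_def by (simp add: diff_divide_distrib)
        have e2: "q \<theta> + 1 = (\<theta> + real (n \<theta>)) / real (n \<theta>)" unfolding q_def using Np by (simp add: field_simps)
        have e3: "(u \<theta> - v \<theta>) / (q \<theta> + 1) = (real (Kf a (n \<theta>)) - 1) / (\<theta> + real (n \<theta>))"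
          unfolding e1 e2 using Np d2 by simp
        show ?thesis unfolding e3 using d2 by (simp add: field_simps)
      qed
      thus ?case using D_upper[OF t(1) Kf_bounds(1,2)[OF a(1) less_imp_le[OF a(2)] N1]] by simp
    qed
  qed
qed

lemma caseD_one: assumes n: "filterlim (n :: real \<Rightarrow> nat) at_top at_top"
  and r: "((\<lambda>\<theta>. \<theta> / real (n \<theta>)) \<longlongrightarrow> 0) at_top"
  shows "filterlim (\<lambda>\<theta>. ln (Tt \<theta> (n \<theta>) (Kf 1 (n \<theta>))) / \<theta>) at_bot at_top"
proof -
  define v where "v = (\<lambda>\<theta>. 1 / real (n \<theta>))"
  define q where "q = (\<lambda>\<theta>. \<theta> / real (n \<theta>))"
  have vl: "(v \<longlongrightarrow> 0) at_top" unfolding v_def by (rule inv_n_0[OF n])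
  have ql: "(q \<longlongrightarrow> 0) at_top" unfolding q_def by (rule r)
  have ev: "eventually (\<lambda>\<theta>. \<theta> > 0 \<and> 1 \<le> n \<theta>) at_top"
    using ev_n1[OF n] eventually_gt_at_top[of "0::real"] by eventually_elim auto
  have fl: "((\<lambda>\<theta>. (q \<theta> + v \<theta>) / (q \<theta> + 1)) \<longlongrightarrow> (0 + 0) / (0 + 1)) at_top"
    by (intro tendsto_divide tendsto_add tendsto_const ql vl) auto
  have fr: "filterlim (\<lambda>\<theta>. (q \<theta> + v \<theta>) / (q \<theta> + 1)) (at_right 0) at_top"
  proof (rule tendsto_imp_filterlim_at_right)
    show "((\<lambda>\<theta>. (q \<theta> + v \<theta>) / (q \<theta> + 1)) \<longlongrightarrow> 0) at_top" using fl by simp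
    show "eventually (\<lambda>\<theta>. (q \<theta> + v \<theta>) / (q \<theta> + 1) > 0) at_top"
      using ev by eventually_elim (auto simp: q_def v_def intro!: divide_pos_pos add_pos_pos)
  qed
  have lb: "filterlim (\<lambda>\<theta>. ln ((q \<theta> + v \<theta>) / (q \<theta> + 1))) at_bot at_top"
    by (rule filterlim_compose[OF ln_at_0 fr])
  have le: "eventually (\<lambda>\<theta>. ln (Tt \<theta> (n \<theta>) (Kf 1 (n \<theta>))) / \<theta> \<le> ln ((q \<theta> + v \<theta>) / (q \<theta> + 1))) at_top"
    using ev
  proof eventually_elim
    case (elim \<theta>)
    hence t: "\<theta> > 0" "1 \<le> n \<theta>" by auto
    have Np: "real (n \<theta>) > 0" using t by simp
    have "(q \<theta> + v \<theta>) / (q \<theta> + 1) = (\<theta> + real (n \<theta>) - real (Kf 1 (n \<theta>)) + 1) / (\<theta> + real (n \<theta>))"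
    proof -
      have d2: "\<theta> + real (n \<theta>) > 0" using t by simp
      have e1: "q \<theta> + v \<theta> = (\<theta> + 1) / real (n \<theta>)" unfolding q_def v_def by (simp add: add_divide_distrib)
      have e2: "q \<theta> + 1 = (\<theta> + real (n \<theta>)) / real (n \<theta>)" unfolding q_def using Np by (simp add: field_simps)
      show ?thesis unfolding e1 e2 Kf_one[OF t(2)] using Np d2 by simp
    qed
    thus ?case using D_upper[OF t(1), of "Kf 1 (n \<theta>)" "n \<theta>"] Kf_one[OF t(2)] t(2) by simp
  qed
  show ?thesis unfolding filterlim_at_bot_dense
  proof
    fix Z :: real
    have "eventually (\<lambda>\<theta>. ln ((q \<theta> + v \<theta>) / (q \<theta> + 1)) < Z) at_top"
      using lb unfolding filterlim_at_bot_dense by blast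
    thus "eventually (\<lambda>\<theta>. ln (Tt \<theta> (n \<theta>) (Kf 1 (n \<theta>))) / \<theta> < Z) at_top"
      using le by eventually_elim auto
  qed
qed


lemma B_upper: assumes t: "\<theta> > 0" and K: "1 \<le> K" "K \<le> N"
  shows "ln (Tt \<theta> N K) \<le> (real K - 1) * (- ln (\<theta> / real N))"
proof -
  have Np: "real N > 0" using K by simp
  have "(\<Sum>j\<in>{1..<K}. ln (real N - real j) - ln (\<theta> + real N - real j)) \<le> of_nat (card {1..<K}) * (- ln (\<theta> / real N))"
  proof (rule sum_bounded_above)
    fix j assume j: "j \<in> {1..<K}"
    have y: "real N - real j > 0" using j K by simp
    have m1: "real N * real j \<le> real N * real N" using y Np by (intro mult_left_mono) auto
    have m2: "0 \<le> \<theta> * real j" using t by simp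
    have "(real N - real j) * \<theta> \<le> real N * (\<theta> + real N - real j)"
      using m1 m2 by (simp add: algebra_simps)
    hence "(real N - real j) / (\<theta> + real N - real j) \<le> real N / \<theta>"
      using y t by (simp add: divide_simps)
    hence "ln ((real N - real j) / (\<theta> + real N - real j)) \<le> ln (real N / \<theta>)"
      using y t by simp
    thus "ln (real N - real j) - ln (\<theta> + real N - real j) \<le> - ln (\<theta> / real N)"
      using y t Np by (simp add: ln_div)
  qed
  also have "of_nat (card {1..<K}) = real K - 1" using K by simp
  finally show ?thesis unfolding ln_Tt[OF t K(2)] .
qed

lemma B_lower: assumes t: "\<theta> > 0" and K: "1 \<le> K" "K \<le> N" and N2: "2 \<le> N"
  shows "- (real K - 1) * (ln ((\<theta> + real N) / (real N - 1)) + 1) \<le> ln (Tt \<theta> N K)"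
proof -
  have Np: "real N > 1" using N2 by simp
  have s1: "Fx (real N - 1) - Fx (real N - real K) \<le> (\<Sum>j\<in>{1..<K}. ln (real N - real j))"
    by (rule sumln_lower) (use K in auto)
  have xl: "xlogx (real N - real K) \<le> (real N - real K) * ln (real N - 1)"
  proof (cases "K = N")
    case True thus ?thesis by (simp add: xlogx_def)
  next
    case False
    hence "real N - real K \<ge> 1" using K by simp
    hence "ln (real N - real K) \<le> ln (real N - 1)" using K by simp
    hence "(real N - real K) * ln (real N - real K) \<le> (real N - real K) * ln (real N - 1)"
      using K by (intro mult_left_mono) auto
    thus ?thesis by (simp add: xlogx_eq)
  qed
  have s1': "(real K - 1) * ln (real N - 1) - (real K - 1) \<le> Fx (real N - 1) - Fx (real N - real K)"
  proof -
    have "Fx (real N - 1) - Fx (real N - real K) = (real N - 1) * ln (real N - 1) - xlogx (real N - real K) - (real K - 1)"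
      by (simp add: Fx_def xlogx_eq)
    moreover have "(real K - 1) * ln (real N - 1) = (real N - 1) * ln (real N - 1) - (real N - real K) * ln (real N - 1)"
      by (simp add: algebra_simps)
    ultimately show ?thesis using xl by linarith
  qed
  have s2: "(\<Sum>j\<in>{1..<K}. ln (\<theta> + real N - real j)) \<le> of_nat (card {1..<K}) * ln (\<theta> + real N)"
  proof (rule sum_bounded_above)
    fix j assume j: "j \<in> {1..<K}"
    hence "\<theta> + real N - real j > 0" "\<theta> + real N - real j \<le> \<theta> + real N" using K t by auto
    thus "ln (\<theta> + real N - real j) \<le> ln (\<theta> + real N)" by simp
  qed
  have c: "of_nat (card {1..<K}) = real K - 1" using K by simp
  have "ln (Tt \<theta> N K) \<ge> (real K - 1) * ln (real N - 1) - (real K - 1) - (real K - 1) * ln (\<theta> + real N)"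
  proof -
    have s2': "(\<Sum>j\<in>{1..<K}. ln (\<theta> + real N - real j)) \<le> (real K - 1) * ln (\<theta> + real N)"
      using s2 c by simp
    show ?thesis unfolding sum_ln_Tt[OF t K(2)] using s1 s1' s2' by linarith
  qed
  moreover have eq: "ln ((\<theta> + real N) / (real N - 1)) = ln (\<theta> + real N) - ln (real N - 1)"
    using Np t by (simp add: ln_div)
  moreover have "- (real K - 1) * (ln ((\<theta> + real N) / (real N - 1)) + 1)
     = (real K - 1) * ln (real N - 1) - (real K - 1) - (real K - 1) * ln (\<theta> + real N)"
    unfolding eq by (simp add: algebra_simps)
  ultimately show ?thesis by linarith
qed

lemma caseB_lim: assumes n: "filterlim (n :: real \<Rightarrow> nat) at_top at_top"
  and r: "filterlim (\<lambda>\<theta>. \<theta> / real (n \<theta>)) at_top at_top" and a: "0 \<le> a" "a \<le> 1"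
  shows "((\<lambda>\<theta>. ln (Tt \<theta> (n \<theta>) (Kf a (n \<theta>))) / (real (n \<theta>) * ln (\<theta> / real (n \<theta>)))) \<longlongrightarrow> - a) at_top"
proof -
  define u where "u = (\<lambda>\<theta>. real (Kf a (n \<theta>)) / real (n \<theta>))"
  define v where "v = (\<lambda>\<theta>. 1 / real (n \<theta>))"
  define q where "q = (\<lambda>\<theta>. \<theta> / real (n \<theta>))"
  have ul: "(u \<longlongrightarrow> a) at_top" unfolding u_def by (rule u_lim[OF n a])
  have vl: "(v \<longlongrightarrow> 0) at_top" unfolding v_def by (rule inv_n_0[OF n])
  have qt: "filterlim q at_top at_top" unfolding q_def by (rule r)
  have iq: "((\<lambda>\<theta>. 1 / q \<theta>) \<longlongrightarrow> 0) at_top"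
    by (rule tendsto_divide_0[OF tendsto_const filterlim_at_top_imp_at_infinity[OF qt]])
  have lq: "filterlim (\<lambda>\<theta>. ln (q \<theta>)) at_top at_top" by (rule filterlim_compose[OF ln_at_top qt])
  have ev2: "eventually (\<lambda>\<theta>. 2 \<le> real (n \<theta>)) at_top"
    using filterlim_at_top[THEN iffD1, OF nreal_top[OF n]] by blast
  have evq: "eventually (\<lambda>\<theta>. 1 < q \<theta>) at_top" using qt by (simp add: filterlim_at_top_dense)
  have ev: "eventually (\<lambda>\<theta>. \<theta> > 0 \<and> 2 \<le> real (n \<theta>) \<and> 1 < q \<theta>) at_top"
    using ev2 evq eventually_gt_at_top[of "0::real"] by eventually_elim auto
  let ?U = "\<lambda>\<theta>. - (u \<theta> - v \<theta>)"
  let ?L = "\<lambda>\<theta>. - (u \<theta> - v \<theta>) * (1 + (ln ((1 + 1 / q \<theta>) / (1 - v \<theta>)) + 1) / ln (q \<theta>))"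
  have Ul: "(?U \<longlongrightarrow> - (a - 0)) at_top" by (intro tendsto_intros ul vl)
  have z: "((\<lambda>\<theta>. (ln ((1 + 1 / q \<theta>) / (1 - v \<theta>)) + 1) / ln (q \<theta>)) \<longlongrightarrow> 0) at_top"
  proof (rule tendsto_divide_0[OF _ filterlim_at_top_imp_at_infinity[OF lq]])
    show "((\<lambda>\<theta>. ln ((1 + 1 / q \<theta>) / (1 - v \<theta>)) + 1) \<longlongrightarrow> ln ((1 + 0) / (1 - 0)) + 1) at_top"
      by (intro tendsto_add tendsto_ln tendsto_divide tendsto_diff tendsto_const iq vl) auto
  qed
  have Ll: "(?L \<longlongrightarrow> - (a - 0) * (1 + 0)) at_top" by (intro tendsto_intros ul vl z)
  show ?thesis
  proof (rule tendsto_sandwich)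
    show "((\<lambda>\<theta>. ?L \<theta>) \<longlongrightarrow> - a) at_top" using Ll by simp
    show "((\<lambda>\<theta>. ?U \<theta>) \<longlongrightarrow> - a) at_top" using Ul by simp
    show "eventually (\<lambda>\<theta>. ln (Tt \<theta> (n \<theta>) (Kf a (n \<theta>))) / (real (n \<theta>) * ln (\<theta> / real (n \<theta>))) \<le> ?U \<theta>) at_top"
      using ev
    proof eventually_elim
      case (elim \<theta>)
      hence t: "\<theta> > 0" "2 \<le> real (n \<theta>)" "1 < q \<theta>" by auto
      have N1: "1 \<le> n \<theta>" using t by simp
      have Np: "real (n \<theta>) > 0" using t by simp
      have lqp: "ln (\<theta> / real (n \<theta>)) > 0" using t(3) unfolding q_def by simp
      have h: "ln (Tt \<theta> (n \<theta>) (Kf a (n \<theta>))) \<le> (real (Kf a (n \<theta>)) - 1) * (- ln (\<theta> / real (n \<theta>)))"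
        by (rule B_upper[OF t(1) Kf_bounds(1,2)[OF a N1]])
      have "ln (Tt \<theta> (n \<theta>) (Kf a (n \<theta>))) / (real (n \<theta>) * ln (\<theta> / real (n \<theta>)))
          \<le> (real (Kf a (n \<theta>)) - 1) * (- ln (\<theta> / real (n \<theta>))) / (real (n \<theta>) * ln (\<theta> / real (n \<theta>)))"
        using h Np lqp by (intro divide_right_mono) auto
      also have "\<dots> = - (u \<theta> - v \<theta>)" unfolding u_def v_def using Np lqp by (simp add: field_simps)
      finally show ?case .
    qed
    show "eventually (\<lambda>\<theta>. ?L \<theta> \<le> ln (Tt \<theta> (n \<theta>) (Kf a (n \<theta>))) / (real (n \<theta>) * ln (\<theta> / real (n \<theta>)))) at_top"
      using ev
    proof eventually_elim
      case (elim \<theta>)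
      hence t: "\<theta> > 0" "2 \<le> real (n \<theta>)" "1 < q \<theta>" by auto
      have N1: "1 \<le> n \<theta>" "2 \<le> n \<theta>" using t by auto
      have Np: "real (n \<theta>) > 0" using t by simp
      have N1p: "real (n \<theta>) - 1 > 0" using t by simp
      have lqp: "ln (q \<theta>) > 0" using t(3) by simp
      have h: "- (real (Kf a (n \<theta>)) - 1) * (ln ((\<theta> + real (n \<theta>)) / (real (n \<theta>) - 1)) + 1) \<le> ln (Tt \<theta> (n \<theta>) (Kf a (n \<theta>)))"
        by (rule B_lower[OF t(1) Kf_bounds(1,2)[OF a N1(1)] N1(2)])
      have sp: "(\<theta> + real (n \<theta>)) / (real (n \<theta>) - 1) = q \<theta> * ((1 + 1 / q \<theta>) / (1 - v \<theta>))"
        unfolding q_def v_def using Np N1p t by (simp add: field_simps)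
      have pos: "(1 + 1 / q \<theta>) / (1 - v \<theta>) > 0" unfolding v_def using t N1p Np
        by (intro divide_pos_pos) (auto simp: field_simps)
      have lsp: "ln ((\<theta> + real (n \<theta>)) / (real (n \<theta>) - 1)) = ln (q \<theta>) + ln ((1 + 1 / q \<theta>) / (1 - v \<theta>))"
        unfolding sp by (subst ln_mult) (use pos t in auto)
      have "?L \<theta> = - (real (Kf a (n \<theta>)) - 1) * (ln ((\<theta> + real (n \<theta>)) / (real (n \<theta>) - 1)) + 1) / (real (n \<theta>) * ln (q \<theta>))"
        unfolding lsp u_def v_def using Np lqp by (simp add: field_simps)
      also have "\<dots> \<le> ln (Tt \<theta> (n \<theta>) (Kf a (n \<theta>))) / (real (n \<theta>) * ln (q \<theta>))"
        using h Np lqp by (intro divide_right_mono) auto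
      finally show ?case unfolding q_def .
    qed
  qed
qed


lemma sublevel_cont: assumes "continuous_on {0..1} (f :: real \<Rightarrow> real)"
  shows "closed {x\<in>{0..1}. ereal (f x) \<le> b}"
proof (cases b)
  case (real r)
  have "{x\<in>{0..1}. ereal (f x) \<le> b} = {0..1} \<inter> f -` {..r}" using real by auto
  also have "closed \<dots>" by (rule continuous_closed_preimage[OF assms]) auto
  finally show ?thesis .
next
  case PInf
  hence "{x\<in>{0..1}. ereal (f x) \<le> b} = {0..1}" by auto
  thus ?thesis by simp
next
  case MInf
  hence "{x\<in>{0..1}. ereal (f x) \<le> b} = {}" by auto
  thus ?thesis by (metis closed_empty)
qed

lemma rC_cont: assumes c: "c > 0" shows "continuous_on {0..1} (rC c)"
proof -
  have a: "continuous_on {0..1} (\<lambda>x::real. xlogx (1 - x))"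
    by (rule continuous_on_compose2[OF xlogx_cont]) (auto intro!: continuous_intros)
  have b: "continuous_on {0..1} (\<lambda>x::real. xlogx (c + 1 - x))"
    by (rule continuous_on_compose2[OF xlogx_cont]) (use c in \<open>auto intro!: continuous_intros\<close>)
  show ?thesis unfolding rC_def[abs_def] by (intro continuous_intros a b)
qed

theorem theorem4p7:
  fixes n :: "real \<Rightarrow> nat"
  assumes "filterlim n at_top at_top"
  shows
    "(filterlim (\<lambda>\<theta>. \<theta> / real (n \<theta>)) at_top at_top \<longrightarrow>
        LDP01 (\<lambda>\<theta>. scaled_law \<theta> (n \<theta>)) (\<lambda>\<theta>. real (n \<theta>) * ln (\<theta> / real (n \<theta>))) (\<lambda>x. ereal x))
   \<and> (\<forall>c>0. ((\<lambda>\<theta>. \<theta> / real (n \<theta>)) \<longlongrightarrow> c) at_top \<longrightarrow>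
        LDP01 (\<lambda>\<theta>. scaled_law \<theta> (n \<theta>)) (\<lambda>\<theta>. \<theta>) (rate_C c))
   \<and> (((\<lambda>\<theta>. \<theta> / real (n \<theta>)) \<longlongrightarrow> 0) at_top \<longrightarrow>
        LDP01 (\<lambda>\<theta>. scaled_law \<theta> (n \<theta>)) (\<lambda>\<theta>. \<theta>) rate_D)"
proof (intro conjI impI allI)
  note n = assms
  have idt: "filterlim (\<lambda>\<theta>::real. \<theta>) at_top at_top" by (rule filterlim_ident)
  {
    assume r: "filterlim (\<lambda>\<theta>. \<theta> / real (n \<theta>)) at_top at_top"
    have g: "filterlim (\<lambda>\<theta>. real (n \<theta>) * ln (\<theta> / real (n \<theta>))) at_top at_top"
    proof (rule filterlim_at_top_mono[OF filterlim_compose[OF ln_at_top r]])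
      have "eventually (\<lambda>\<theta>. 1 \<le> real (n \<theta>) \<and> 1 < \<theta> / real (n \<theta>)) at_top"
        using ev_nat_ge[OF n, of 1] r[unfolded filterlim_at_top_dense] by (auto intro: eventually_conj)
      thus "eventually (\<lambda>\<theta>. ln (\<theta> / real (n \<theta>)) \<le> real (n \<theta>) * ln (\<theta> / real (n \<theta>))) at_top"
      proof eventually_elim
        case (elim \<theta>)
        hence "ln (\<theta> / real (n \<theta>)) \<ge> 0" by (intro ln_ge_zero) auto
        thus ?case using elim mult_right_mono[of 1 "real (n \<theta>)" "ln (\<theta> / real (n \<theta>))"] by simp
      qed
    qed
    interpret ldp_setup n "\<lambda>\<theta>. real (n \<theta>) * ln (\<theta> / real (n \<theta>))" "\<lambda>x. ereal x"
    proof
      fix a :: real assume a: "a \<in> {0..1}"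
      have "((\<lambda>\<theta>. ereal (ln (Tt \<theta> (n \<theta>) (Kf a (n \<theta>))) / (real (n \<theta>) * ln (\<theta> / real (n \<theta>))))) \<longlongrightarrow> ereal (- a)) at_top"
        using caseB_lim[OF n r] a by (simp add: lim_ereal)
      thus "((\<lambda>\<theta>. ereal (ln (Tt \<theta> (n \<theta>) (Kf a (n \<theta>))) / (real (n \<theta>) * ln (\<theta> / real (n \<theta>))))) \<longlongrightarrow> - ereal a) at_top"
        by simp
    qed (rule n, rule g)
    show "LDP01 (\<lambda>\<theta>. scaled_law \<theta> (n \<theta>)) (\<lambda>\<theta>. real (n \<theta>) * ln (\<theta> / real (n \<theta>))) (\<lambda>x. ereal x)"
      by (rule LDP) (rule sublevel_cont[OF continuous_on_id])
  }
  {
    fix c :: real assume c: "c > 0" and r: "((\<lambda>\<theta>. \<theta> / real (n \<theta>)) \<longlongrightarrow> c) at_top"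
    have rc: "rate_C c = (\<lambda>x. ereal (rC c x))" by (rule ext) (simp add: rate_C_def rC_def)
    interpret ldp_setup n "\<lambda>\<theta>. \<theta>" "rate_C c"
    proof
      fix a :: real assume a: "a \<in> {0..1}"
      have "((\<lambda>\<theta>. ereal (ln (Tt \<theta> (n \<theta>) (Kf a (n \<theta>))) / \<theta>)) \<longlongrightarrow> ereal (- rC c a)) at_top"
        using caseC_lim[OF n r c] a by (simp add: lim_ereal)
      thus "((\<lambda>\<theta>. ereal (ln (Tt \<theta> (n \<theta>) (Kf a (n \<theta>))) / \<theta>)) \<longlongrightarrow> - rate_C c a) at_top"
        by (simp add: rc)
    qed (rule n, rule idt)
    show "LDP01 (\<lambda>\<theta>. scaled_law \<theta> (n \<theta>)) (\<lambda>\<theta>. \<theta>) (rate_C c)"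
      by (rule LDP) (unfold rc, rule sublevel_cont[OF rC_cont[OF c]])
  }
  {
    assume r: "((\<lambda>\<theta>. \<theta> / real (n \<theta>)) \<longlongrightarrow> 0) at_top"
    interpret ldp_setup n "\<lambda>\<theta>. \<theta>" rate_D
    proof
      fix a :: real assume a: "a \<in> {0..1}"
      show "((\<lambda>\<theta>. ereal (ln (Tt \<theta> (n \<theta>) (Kf a (n \<theta>))) / \<theta>)) \<longlongrightarrow> - rate_D a) at_top"
      proof (cases "a < 1")
        case True
        have "((\<lambda>\<theta>. ereal (ln (Tt \<theta> (n \<theta>) (Kf a (n \<theta>))) / \<theta>)) \<longlongrightarrow> ereal (ln (1 - a))) at_top"
          using caseD_lim[OF n r] a True by (simp add: lim_ereal)
        moreover have "- rate_D a = ereal (ln (1 - a))" using True by (simp add: rate_D_def ln_div)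
        ultimately show ?thesis by simp
      next
        case False
        hence a1: "a = 1" using a by simp
        have fb: "filterlim (\<lambda>\<theta>. ln (Tt \<theta> (n \<theta>) (Kf 1 (n \<theta>))) / \<theta>) at_bot at_top" by (rule caseD_one[OF n r])
        have "((\<lambda>\<theta>. ereal (ln (Tt \<theta> (n \<theta>) (Kf 1 (n \<theta>))) / \<theta>)) \<longlongrightarrow> - \<infinity>) at_top"
          unfolding tendsto_MInfty using fb[unfolded filterlim_at_bot_dense] by simp
        thus ?thesis using a1 by (simp add: rate_D_def)
      qed
    qed (rule n, rule idt)
    show "LDP01 (\<lambda>\<theta>. scaled_law \<theta> (n \<theta>)) (\<lambda>\<theta>. \<theta>) rate_D"
    proof (rule LDP)
      fix b :: ereal
      show "closed {x\<in>{0..1}. rate_D x \<le> b}"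
      proof (cases b)
        case (real r)
        have "{x\<in>{0..1}. rate_D x \<le> b} = {0..1} \<inter> {..1 - exp (- r)}"
        proof (intro set_eqI iffI)
          fix x assume x: "x \<in> {x\<in>{0..1}. rate_D x \<le> b}"
          hence x1: "x < 1" using real by (auto simp: rate_D_def split: if_splits)
          hence "ln (1 / (1 - x)) \<le> r" using x real by (auto simp: rate_D_def)
          hence "- ln (1 - x) \<le> r" using x1 by (simp add: ln_div)
          hence "exp (- r) \<le> exp (ln (1 - x))" by simp
          hence "exp (- r) \<le> 1 - x" using x1 by simp
          thus "x \<in> {0..1} \<inter> {..1 - exp (- r)}" using x by auto
        next
          fix x assume x: "x \<in> {0..1} \<inter> {..1 - exp (- r)}"
          have ep: "exp (- r) > 0" by simp
          have "x \<le> 1 - exp (- r)" using x by auto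
          hence x1: "x < 1" using ep by linarith
          have "exp (- r) \<le> 1 - x" using x by auto
          hence "ln (exp (- r)) \<le> ln (1 - x)" using ep x1 by (subst ln_le_cancel_iff) auto
          hence "ln (1 / (1 - x)) \<le> r" using x1 by (simp add: ln_div)
          thus "x \<in> {x\<in>{0..1}. rate_D x \<le> b}" using x x1 real by (auto simp: rate_D_def)
        qed
        thus ?thesis by simp
      next
        case PInf
        hence "{x\<in>{0..1}. rate_D x \<le> b} = {0..1}" by auto
        thus ?thesis by simp
      next
        case MInf
        hence "{x\<in>{0..1}. rate_D x \<le> b} = {}" by (auto simp: rate_D_def)
        thus ?thesis by (metis closed_empty)
      qed
    qed
  }
qed

end
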